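(* Let $\mathcal{A}$ be an unambiguous strongly noncollapsing irreducible Phan amalgam of rank three with rank-one groups $M_1,M_2,M_3$ and rank-two groups $M_{12}=\langle M_1,M_2\rangle\cong{\rm SU}_3(\mathbb{C})$, $M_{13}=\langle M_1,M_3\rangle\cong M_1\times M_3\cong{\rm SU}_2(\mathbb{C})\times{\rm SU}_2(\mathbb{C})$, and $M_{23}=\langle M_2,M_3\rangle$ isomorphic to ${\rm SU}_3(\mathbb{C})$, ${\rm Spin}_5(\mathbb{R})$ or ${\rm U}_2(\mathbb{H})$ (diagram $A_3$, $B_3$ or $C_3$ with node $2$ in the middle), where $M_2=M_{12}\cap M_{23}$, $M_1=M_{12}\cap M_{13}$, $M_3=M_{13}\cap M_{23}$. Put $D^1_2=N_{M_2}(M_1)$, the normalizer computed inside $M_{12}$, and $D^3_2=N_{M_2}(M_3)$, the normalizer computed inside $M_{23}$. Then $D^1_2=D^3_2$.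
   Context: Let $G$ be a simply connected compact semisimple Lie group with maximal torus $T$, root system $\Sigma$ of $G_{\mathbb{C}}$ relative to $T_{\mathbb{C}}$ and fundamental system $\Pi$; $G_\alpha$ ($\alpha\in\Pi$) denotes the semisimple rank-one subgroup corresponding to $\alpha$ and $G_{\alpha\beta}=\langle G_\alpha,G_\beta\rangle$. A Phan amalgam over $\Pi$ is an amalgam (set with partial multiplication which is the union of member groups, products defined only within members, intersections of members being subgroups) consisting of groups $L_\alpha$ and $L_{\alpha\beta}$ ($\alpha\ne\beta\in\Pi$) with each $L_{\alpha\beta}$ isomorphic to a central quotient of $G_{\alpha\beta}$ such that $L_\alpha,L_\beta$ are the images of $G_\alpha,G_\beta$. It is unambiguous if each $L_{\alpha\beta}\cong G_{\alpha\beta}$ in this way; irreducible if $\Pi$ is a fundamental system of an irreducible root system (connected Dynkin diagram); its rank is $|\Pi|$; it is strongly noncollapsing if there is a group $H$ and a map $\pi:\mathcal{A}\to H$ which is a homomorphism on every member group, with $\pi(\mathcal{A})$ generating $H$, such that the kernel of $\pi|_{L_\alpha}$ is central for every $\alpha\in\Pi$. Here the $L_\alpha$ are denoted $M_1,M_2,M_3$ and the $L_{\alpha\beta}$ are denoted $M_{ij}$. *)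

theory Defs
  imports "HOL-Analysis.Analysis" "HOL-Algebra.Algebra"
begin

definition cadj :: "complex^'n^'m \<Rightarrow> complex^'m^'n" where
  "cadj A = (\<chi> i j. cnj (A $ j $ i))"

definition SU_set :: "(complex^'n::finite^'n) set" where
  "SU_set = {A. A ** cadj A = mat 1 \<and> det A = 1}"

definition matgrp :: "(complex^'n::finite^'n) set \<Rightarrow> (complex^'n^'n) monoid" where
  "matgrp S = \<lparr>carrier = S, mult = (**), one = mat 1\<rparr>"

abbreviation SU2 :: "(complex^2^2) monoid" where "SU2 \<equiv> matgrp SU_set"
abbreviation SU3 :: "(complex^3^3) monoid" where "SU3 \<equiv> matgrp SU_set"

(* rank-one subgroups of SU_3(C) for the simple roots: upper-left and lower-right SU_2 blocks *)
definition SU3_G1 :: "(complex^3^3) set" where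
  "SU3_G1 = {A \<in> SU_set. A$1$3 = 0 \<and> A$2$3 = 0 \<and> A$3$1 = 0 \<and> A$3$2 = 0 \<and> A$3$3 = 1}"
definition SU3_G2 :: "(complex^3^3) set" where
  "SU3_G2 = {A \<in> SU_set. A$1$1 = 1 \<and> A$1$2 = 0 \<and> A$1$3 = 0 \<and> A$2$1 = 0 \<and> A$3$1 = 0}"

abbreviation SU2xSU2 :: "((complex^2^2) \<times> (complex^2^2)) monoid" where
  "SU2xSU2 \<equiv> SU2 \<times>\<times> SU2"
definition SU2xSU2_G1 :: "((complex^2^2) \<times> (complex^2^2)) set" where
  "SU2xSU2_G1 = SU_set \<times> {mat 1}"
definition SU2xSU2_G2 :: "((complex^2^2) \<times> (complex^2^2)) set" where
  "SU2xSU2_G2 = {mat 1} \<times> SU_set"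

(* U_2(H) = Sp(2) realized as the compact symplectic group U(4) \<inter> Sp_4(C),
   coordinates (1,2 | 3,4), symplectic form J *)
definition J4 :: "complex^4^4" where
  "J4 = (\<chi> i j. if i = 1 \<and> j = 3 then 1 else if i = 2 \<and> j = 4 then 1
               else if i = 3 \<and> j = 1 then -1 else if i = 4 \<and> j = 2 then -1 else 0)"
definition Sp2_set :: "(complex^4^4) set" where
  "Sp2_set = {A. A ** cadj A = mat 1 \<and> transpose A ** J4 ** A = J4}"
abbreviation Sp2 :: "(complex^4^4) monoid" where "Sp2 \<equiv> matgrp Sp2_set"

(* relative to the diagonal torus diag(t1,t2,t1^-1,t2^-1), simple roots e1-e2 (short), 2e2 (long) *)
(* short root SU_2: { diag(U, conj U) : U in SU_2 } *)
definition Sp2_short :: "(complex^4^4) set" where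
  "Sp2_short = (\<lambda>U::complex^2^2. \<chi> i j::4.
      let f = (\<lambda>k::4. if k = 1 \<or> k = 3 then (1::2) else 2) in
      if (i = 1 \<or> i = 2) \<and> (j = 1 \<or> j = 2) then U $ f i $ f j
      else if (i = 3 \<or> i = 4) \<and> (j = 3 \<or> j = 4) then cnj (U $ f i $ f j)
      else 0) ` SU_set"
definition Sp2_long :: "(complex^4^4) set" where
  "Sp2_long = {A \<in> Sp2_set. \<forall>i j. (i \<in> {1,3} \<or> j \<in> {1,3}) \<longrightarrow> A$i$j = (if i = j then 1 else 0)}"

end

theory Submission
  imports Defs
begin

definition rigid :: "'g monoid \<Rightarrow> 'g set \<Rightarrow> 'g set \<Rightarrow> 'g \<Rightarrow> 'h itself \<Rightarrow> bool" where
 "rigid G Xg Yg t T \<longleftrightarrow> (\<forall>H::'h monoid. \<forall>\<pi>. \<forall>h. \<forall>s. group H \<longrightarrow> \<pi> \<in> hom G H \<longrightarrow>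
   (\<forall>x\<in>Xg. \<pi> x = one H \<longrightarrow> (\<forall>x'\<in>Xg. x \<otimes>\<^bsub>G\<^esub> x' = x' \<otimes>\<^bsub>G\<^esub> x)) \<longrightarrow>
   (\<forall>y\<in>Yg. \<pi> y = one H \<longrightarrow> (\<forall>y'\<in>Yg. y \<otimes>\<^bsub>G\<^esub> y' = y' \<otimes>\<^bsub>G\<^esub> y)) \<longrightarrow>
   h \<in> carrier H \<longrightarrow> s \<in> Yg \<longrightarrow> (\<forall>x\<in>Xg. mult H h (\<pi> x) = mult H (\<pi> x) h) \<longrightarrow>
   (\<forall>y\<in>Yg. mult H (mult H h (\<pi> y)) (m_inv H h) = \<pi> (s \<otimes>\<^bsub>G\<^esub> y \<otimes>\<^bsub>G\<^esub> inv\<^bsub>G\<^esub> s)) \<longrightarrow>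
   s \<otimes>\<^bsub>G\<^esub> t = t \<otimes>\<^bsub>G\<^esub> s)"

definition good :: "'g monoid \<Rightarrow> 'g set \<Rightarrow> 'g set \<Rightarrow> 'h itself \<Rightarrow> bool" where
 "good G Xg Yg T \<longleftrightarrow> (\<exists>z t. z \<in> Xg \<and> t \<in> Yg \<and>
    (\<forall>y\<in>Yg. z \<otimes>\<^bsub>G\<^esub> y \<otimes>\<^bsub>G\<^esub> inv\<^bsub>G\<^esub> z = t \<otimes>\<^bsub>G\<^esub> y \<otimes>\<^bsub>G\<^esub> inv\<^bsub>G\<^esub> t) \<and>
    Yg \<inter> normalizer G Xg = {y\<in>Yg. y \<otimes>\<^bsub>G\<^esub> t = t \<otimes>\<^bsub>G\<^esub> y} \<and>
    (\<forall>a\<in>Yg \<inter> normalizer G Xg. \<forall>b\<in>Yg \<inter> normalizer G Xg. a \<otimes>\<^bsub>G\<^esub> b = b \<otimes>\<^bsub>G\<^esub> a) \<and>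
    rigid G Xg Yg t T)"

lemma conj_set: "g <#\<^bsub>G\<^esub> Xg #>\<^bsub>G\<^esub> a = (\<lambda>x. g \<otimes>\<^bsub>G\<^esub> x \<otimes>\<^bsub>G\<^esub> a) ` Xg"
  by (auto simp: l_coset_def r_coset_def)

lemma normalizer_iff: "Xg \<subseteq> carrier G \<Longrightarrow>
  g \<in> normalizer G Xg \<longleftrightarrow> g \<in> carrier G \<and> (\<lambda>x. g \<otimes>\<^bsub>G\<^esub> x \<otimes>\<^bsub>G\<^esub> inv\<^bsub>G\<^esub> g) ` Xg = Xg"
  by (auto simp: normalizer_def stabilizer_def conj_set)

lemma normalizer_iso:
  assumes G: "group G" and K: "group K" and iso: "\<phi> \<in> iso G K" and Xg: "Xg \<subseteq> carrier G"
    and g: "g \<in> carrier G"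
  shows "\<phi> g \<in> normalizer K (\<phi> ` Xg) \<longleftrightarrow> g \<in> normalizer G Xg"
proof -
  have hom: "\<phi> \<in> hom G K" and bij: "bij_betw \<phi> (carrier G) (carrier K)"
    using iso by (auto simp: iso_def)
  have gh: "group_hom G K \<phi>" using G K hom by (simp add: group_hom_def group_hom_axioms_def)
  have inj: "inj_on \<phi> (carrier G)" using bij by (simp add: bij_betw_def)
  have XK: "\<phi> ` Xg \<subseteq> carrier K" using Xg hom by (auto simp: hom_def Pi_def)
  have img: "(\<lambda>x. \<phi> g \<otimes>\<^bsub>K\<^esub> x \<otimes>\<^bsub>K\<^esub> inv\<^bsub>K\<^esub> \<phi> g) ` (\<phi> ` Xg)
      = \<phi> ` ((\<lambda>x. g \<otimes>\<^bsub>G\<^esub> x \<otimes>\<^bsub>G\<^esub> inv\<^bsub>G\<^esub> g) ` Xg)"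
  proof -
    have "\<phi> g \<otimes>\<^bsub>K\<^esub> \<phi> x \<otimes>\<^bsub>K\<^esub> inv\<^bsub>K\<^esub> \<phi> g = \<phi> (g \<otimes>\<^bsub>G\<^esub> x \<otimes>\<^bsub>G\<^esub> inv\<^bsub>G\<^esub> g)"
      if x: "x \<in> Xg" for x
    proof -
      have xc: "x \<in> carrier G" using x Xg by auto
      have gi: "inv\<^bsub>G\<^esub> g \<in> carrier G" using G g by (simp add: group.inv_closed)
      have gx: "g \<otimes>\<^bsub>G\<^esub> x \<in> carrier G" using G g xc by (simp add: group.is_monoid monoid.m_closed)
      show ?thesis using group_hom.hom_mult[OF gh gx gi] group_hom.hom_mult[OF gh g xc]
          group_hom.hom_inv[OF gh g] by simp
    qed
    hence "(\<lambda>x. \<phi> g \<otimes>\<^bsub>K\<^esub> \<phi> x \<otimes>\<^bsub>K\<^esub> inv\<^bsub>K\<^esub> \<phi> g) ` Xg = (\<lambda>x. \<phi> (g \<otimes>\<^bsub>G\<^esub> x \<otimes>\<^bsub>G\<^esub> inv\<^bsub>G\<^esub> g)) ` Xg"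
      by (rule image_cong[OF refl])
    then show ?thesis by (simp add: image_image)
  qed
  have sub: "(\<lambda>x. g \<otimes>\<^bsub>G\<^esub> x \<otimes>\<^bsub>G\<^esub> inv\<^bsub>G\<^esub> g) ` Xg \<subseteq> carrier G"
    using g Xg G by (auto intro!: monoid.m_closed group.is_monoid group.inv_closed)
  have "\<phi> ` ((\<lambda>x. g \<otimes>\<^bsub>G\<^esub> x \<otimes>\<^bsub>G\<^esub> inv\<^bsub>G\<^esub> g) ` Xg) = \<phi> ` Xg \<longleftrightarrow>
        (\<lambda>x. g \<otimes>\<^bsub>G\<^esub> x \<otimes>\<^bsub>G\<^esub> inv\<^bsub>G\<^esub> g) ` Xg = Xg"
    using inj_on_image_eq_iff[OF inj sub Xg] .
  moreover have "\<phi> g \<in> carrier K" using g hom by (auto simp: hom_def Pi_def)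
  ultimately show ?thesis using normalizer_iff[OF XK] normalizer_iff[OF Xg] img g by simp
qed

lemma good_iso:
  assumes G: "group G" and K: "group K" and iso: "\<phi> \<in> iso G K"
    and Xg: "Xg \<subseteq> carrier G" and Yg: "Yg \<subseteq> carrier G" and gd: "good G Xg Yg (T::'h itself)"
  shows "good K (\<phi> ` Xg) (\<phi> ` Yg) T"
proof -
  have hom: "\<phi> \<in> hom G K" and bij: "bij_betw \<phi> (carrier G) (carrier K)"
    using iso by (auto simp: iso_def)
  have gh: "group_hom G K \<phi>" using G K hom by (simp add: group_hom_def group_hom_axioms_def)
  have inj: "inj_on \<phi> (carrier G)" using bij by (simp add: bij_betw_def)
  have mult: "\<And>a b. a \<in> carrier G \<Longrightarrow> b \<in> carrier G \<Longrightarrow> \<phi> (a \<otimes>\<^bsub>G\<^esub> b) = \<phi> a \<otimes>\<^bsub>K\<^esub> \<phi> b"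
    using gh by (simp add: group_hom.hom_mult)
  have inv: "\<And>a. a \<in> carrier G \<Longrightarrow> \<phi> (inv\<^bsub>G\<^esub> a) = inv\<^bsub>K\<^esub> \<phi> a"
    using gh by (simp add: group_hom.hom_inv)
  have cl: "\<And>a b. a \<in> carrier G \<Longrightarrow> b \<in> carrier G \<Longrightarrow> a \<otimes>\<^bsub>G\<^esub> b \<in> carrier G"
    using G by (simp add: group.is_monoid monoid.m_closed)
  have icl: "\<And>a. a \<in> carrier G \<Longrightarrow> inv\<^bsub>G\<^esub> a \<in> carrier G" using G by (simp add: group.inv_closed)
  have comm: "\<And>a b. a \<in> carrier G \<Longrightarrow> b \<in> carrier G \<Longrightarrow>
      \<phi> a \<otimes>\<^bsub>K\<^esub> \<phi> b = \<phi> b \<otimes>\<^bsub>K\<^esub> \<phi> a \<longleftrightarrow> a \<otimes>\<^bsub>G\<^esub> b = b \<otimes>\<^bsub>G\<^esub> a"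
    using inj cl mult by (metis inj_on_eq_iff)
  obtain z t where z: "z \<in> Xg" and t: "t \<in> Yg"
    and A: "\<forall>y\<in>Yg. z \<otimes>\<^bsub>G\<^esub> y \<otimes>\<^bsub>G\<^esub> inv\<^bsub>G\<^esub> z = t \<otimes>\<^bsub>G\<^esub> y \<otimes>\<^bsub>G\<^esub> inv\<^bsub>G\<^esub> t"
    and B: "Yg \<inter> normalizer G Xg = {y\<in>Yg. y \<otimes>\<^bsub>G\<^esub> t = t \<otimes>\<^bsub>G\<^esub> y}"
    and C: "\<forall>a\<in>Yg \<inter> normalizer G Xg. \<forall>b\<in>Yg \<inter> normalizer G Xg. a \<otimes>\<^bsub>G\<^esub> b = b \<otimes>\<^bsub>G\<^esub> a"
    and R: "rigid G Xg Yg t T"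
    using gd unfolding good_def by blast
  have zc: "z \<in> carrier G" and tc: "t \<in> carrier G" using z t Xg Yg by auto
  have N: "\<And>y. y \<in> Yg \<Longrightarrow> \<phi> y \<in> normalizer K (\<phi> ` Xg) \<longleftrightarrow> y \<in> normalizer G Xg"
    using normalizer_iso[OF G K iso Xg] Yg by auto
  have A': "\<forall>y\<in>\<phi> ` Yg. \<phi> z \<otimes>\<^bsub>K\<^esub> y \<otimes>\<^bsub>K\<^esub> inv\<^bsub>K\<^esub> \<phi> z = \<phi> t \<otimes>\<^bsub>K\<^esub> y \<otimes>\<^bsub>K\<^esub> inv\<^bsub>K\<^esub> \<phi> t"
  proof
    fix y' assume "y' \<in> \<phi> ` Yg" then obtain y where y: "y \<in> Yg" "y' = \<phi> y" by auto
    have yc: "y \<in> carrier G" using y Yg by auto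
    have "\<phi> z \<otimes>\<^bsub>K\<^esub> y' \<otimes>\<^bsub>K\<^esub> inv\<^bsub>K\<^esub> \<phi> z = \<phi> (z \<otimes>\<^bsub>G\<^esub> y \<otimes>\<^bsub>G\<^esub> inv\<^bsub>G\<^esub> z)"
      using y yc zc by (simp add: mult inv cl icl)
    also have "\<dots> = \<phi> (t \<otimes>\<^bsub>G\<^esub> y \<otimes>\<^bsub>G\<^esub> inv\<^bsub>G\<^esub> t)" using A y by simp
    also have "\<dots> = \<phi> t \<otimes>\<^bsub>K\<^esub> y' \<otimes>\<^bsub>K\<^esub> inv\<^bsub>K\<^esub> \<phi> t"
      using y yc tc by (simp add: mult inv cl icl)
    finally show "\<phi> z \<otimes>\<^bsub>K\<^esub> y' \<otimes>\<^bsub>K\<^esub> inv\<^bsub>K\<^esub> \<phi> z = \<phi> t \<otimes>\<^bsub>K\<^esub> y' \<otimes>\<^bsub>K\<^esub> inv\<^bsub>K\<^esub> \<phi> t" .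
  qed
  have B': "\<phi> ` Yg \<inter> normalizer K (\<phi> ` Xg) = {y\<in>\<phi> ` Yg. y \<otimes>\<^bsub>K\<^esub> \<phi> t = \<phi> t \<otimes>\<^bsub>K\<^esub> y}"
  proof (intro equalityI subsetI)
    fix y' assume "y' \<in> \<phi> ` Yg \<inter> normalizer K (\<phi> ` Xg)"
    then obtain y where y: "y \<in> Yg" "y' = \<phi> y" "\<phi> y \<in> normalizer K (\<phi> ` Xg)" by auto
    then have "y \<in> normalizer G Xg" using N by auto
    then have "y \<otimes>\<^bsub>G\<^esub> t = t \<otimes>\<^bsub>G\<^esub> y" using B y by auto
    then show "y' \<in> {y\<in>\<phi> ` Yg. y \<otimes>\<^bsub>K\<^esub> \<phi> t = \<phi> t \<otimes>\<^bsub>K\<^esub> y}"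
      using comm[of y t] y Yg tc by auto
  next
    fix y' assume "y' \<in> {y\<in>\<phi> ` Yg. y \<otimes>\<^bsub>K\<^esub> \<phi> t = \<phi> t \<otimes>\<^bsub>K\<^esub> y}"
    then obtain y where y: "y \<in> Yg" "y' = \<phi> y" "\<phi> y \<otimes>\<^bsub>K\<^esub> \<phi> t = \<phi> t \<otimes>\<^bsub>K\<^esub> \<phi> y" by auto
    then have "y \<otimes>\<^bsub>G\<^esub> t = t \<otimes>\<^bsub>G\<^esub> y" using comm[of y t] Yg tc by auto
    then have "y \<in> normalizer G Xg" using B y by auto
    then show "y' \<in> \<phi> ` Yg \<inter> normalizer K (\<phi> ` Xg)" using N y by auto
  qed
  have C': "\<forall>a\<in>\<phi> ` Yg \<inter> normalizer K (\<phi> ` Xg). \<forall>b\<in>\<phi> ` Yg \<inter> normalizer K (\<phi> ` Xg).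
      a \<otimes>\<^bsub>K\<^esub> b = b \<otimes>\<^bsub>K\<^esub> a"
  proof (intro ballI)
    fix a' b' assume a': "a' \<in> \<phi> ` Yg \<inter> normalizer K (\<phi> ` Xg)" and b': "b' \<in> \<phi> ` Yg \<inter> normalizer K (\<phi> ` Xg)"
    obtain a where a: "a \<in> Yg" "a' = \<phi> a" "a \<in> normalizer G Xg" using a' N by auto
    obtain b where b: "b \<in> Yg" "b' = \<phi> b" "b \<in> normalizer G Xg" using b' N by auto
    have "a \<otimes>\<^bsub>G\<^esub> b = b \<otimes>\<^bsub>G\<^esub> a" using C a b by auto
    then show "a' \<otimes>\<^bsub>K\<^esub> b' = b' \<otimes>\<^bsub>K\<^esub> a'" using comm[of a b] a b Yg by auto
  qed
  have R': "rigid K (\<phi> ` Xg) (\<phi> ` Yg) (\<phi> t) T"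
    unfolding rigid_def
  proof (intro allI impI)
    fix H :: "'h monoid" and \<pi> h s'
    assume H: "group H" and pih: "\<pi> \<in> hom K H"
      and kX: "\<forall>x\<in>\<phi> ` Xg. \<pi> x = \<one>\<^bsub>H\<^esub> \<longrightarrow> (\<forall>x'\<in>\<phi> ` Xg. x \<otimes>\<^bsub>K\<^esub> x' = x' \<otimes>\<^bsub>K\<^esub> x)"
      and kY: "\<forall>y\<in>\<phi> ` Yg. \<pi> y = \<one>\<^bsub>H\<^esub> \<longrightarrow> (\<forall>y'\<in>\<phi> ` Yg. y \<otimes>\<^bsub>K\<^esub> y' = y' \<otimes>\<^bsub>K\<^esub> y)"
      and h: "h \<in> carrier H" and s': "s' \<in> \<phi> ` Yg"
      and hX: "\<forall>x\<in>\<phi> ` Xg. h \<otimes>\<^bsub>H\<^esub> \<pi> x = \<pi> x \<otimes>\<^bsub>H\<^esub> h"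
      and hY: "\<forall>y\<in>\<phi> ` Yg. h \<otimes>\<^bsub>H\<^esub> \<pi> y \<otimes>\<^bsub>H\<^esub> inv\<^bsub>H\<^esub> h = \<pi> (s' \<otimes>\<^bsub>K\<^esub> y \<otimes>\<^bsub>K\<^esub> inv\<^bsub>K\<^esub> s')"
    obtain s where s: "s \<in> Yg" "s' = \<phi> s" using s' by auto
    have sc: "s \<in> carrier G" using s Yg by auto
    have comp: "(\<pi> \<circ> \<phi>) \<in> hom G H" using hom pih by (rule hom_compose)
    have "s \<otimes>\<^bsub>G\<^esub> t = t \<otimes>\<^bsub>G\<^esub> s"
    proof -
      have 1: "\<forall>x\<in>Xg. (\<pi> \<circ> \<phi>) x = \<one>\<^bsub>H\<^esub> \<longrightarrow> (\<forall>x'\<in>Xg. x \<otimes>\<^bsub>G\<^esub> x' = x' \<otimes>\<^bsub>G\<^esub> x)"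
        using kX comm Xg by (auto simp: subset_iff)
      have 2: "\<forall>y\<in>Yg. (\<pi> \<circ> \<phi>) y = \<one>\<^bsub>H\<^esub> \<longrightarrow> (\<forall>y'\<in>Yg. y \<otimes>\<^bsub>G\<^esub> y' = y' \<otimes>\<^bsub>G\<^esub> y)"
        using kY comm Yg by (auto simp: subset_iff)
      have 3: "\<forall>x\<in>Xg. h \<otimes>\<^bsub>H\<^esub> (\<pi> \<circ> \<phi>) x = (\<pi> \<circ> \<phi>) x \<otimes>\<^bsub>H\<^esub> h" using hX by auto
      have 4: "\<forall>y\<in>Yg. h \<otimes>\<^bsub>H\<^esub> (\<pi> \<circ> \<phi>) y \<otimes>\<^bsub>H\<^esub> inv\<^bsub>H\<^esub> h = (\<pi> \<circ> \<phi>) (s \<otimes>\<^bsub>G\<^esub> y \<otimes>\<^bsub>G\<^esub> inv\<^bsub>G\<^esub> s)"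
      proof
        fix y assume y: "y \<in> Yg"
        then have yc: "y \<in> carrier G" using Yg by auto
        have "\<phi> (s \<otimes>\<^bsub>G\<^esub> y \<otimes>\<^bsub>G\<^esub> inv\<^bsub>G\<^esub> s) = s' \<otimes>\<^bsub>K\<^esub> \<phi> y \<otimes>\<^bsub>K\<^esub> inv\<^bsub>K\<^esub> s'"
          using s sc yc by (simp add: mult inv cl icl)
        then show "h \<otimes>\<^bsub>H\<^esub> (\<pi> \<circ> \<phi>) y \<otimes>\<^bsub>H\<^esub> inv\<^bsub>H\<^esub> h = (\<pi> \<circ> \<phi>) (s \<otimes>\<^bsub>G\<^esub> y \<otimes>\<^bsub>G\<^esub> inv\<^bsub>G\<^esub> s)"
          using hY y by auto
      qed
      note RR = R[unfolded rigid_def, THEN spec[of _ H], THEN spec[of _ "\<pi> \<circ> \<phi>"],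
          THEN spec[of _ h], THEN spec[of _ s]]
      show ?thesis using RR H comp 1 2 3 4 h s(1) by blast
    qed
    then show "s' \<otimes>\<^bsub>K\<^esub> \<phi> t = \<phi> t \<otimes>\<^bsub>K\<^esub> s'" using comm[of s t] sc tc s by auto
  qed
  show ?thesis unfolding good_def
    using z t A' B' C' R' by blast
qed
context group begin
lemma comm_inv_h: "h \<in> carrier G \<Longrightarrow> a \<in> carrier G \<Longrightarrow> h \<otimes> a = a \<otimes> h \<Longrightarrow> inv h \<otimes> a = a \<otimes> inv h"
proof -
  assume c: "h \<in> carrier G" "a \<in> carrier G" and ha: "h \<otimes> a = a \<otimes> h"
  have "inv h \<otimes> a = inv h \<otimes> (a \<otimes> h) \<otimes> inv h" using c by (simp add: m_assoc)
  also have "\<dots> = inv h \<otimes> (h \<otimes> a) \<otimes> inv h" using ha by simp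
  also have "\<dots> = a \<otimes> inv h" using c by (simp add: m_assoc[symmetric])
  finally show ?thesis .
qed

lemma conj_comm_lemma:
  assumes c: "h \<in> carrier G" "a \<in> carrier G" "b \<in> carrier G" and ha: "h \<otimes> a = a \<otimes> h" and ab: "a \<otimes> b = b \<otimes> a"
  shows "a \<otimes> (h \<otimes> b \<otimes> inv h) = (h \<otimes> b \<otimes> inv h) \<otimes> a"
proof -
  have hi: "inv h \<otimes> a = a \<otimes> inv h" using comm_inv_h c ha by blast
  have "a \<otimes> (h \<otimes> b \<otimes> inv h) = h \<otimes> (a \<otimes> b) \<otimes> inv h" using c ha by (simp add: m_assoc[symmetric])
  also have "\<dots> = h \<otimes> b \<otimes> (a \<otimes> inv h)" using c ab by (simp add: m_assoc)
  also have "\<dots> = (h \<otimes> b \<otimes> inv h) \<otimes> a" using c hi by (simp add: m_assoc)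
  finally show ?thesis .
qed

lemma conj_conj_lemma:
  assumes c: "h \<in> carrier G" "a \<in> carrier G" "b \<in> carrier G" and ha: "h \<otimes> a = a \<otimes> h"
  shows "a \<otimes> (h \<otimes> b \<otimes> inv h) \<otimes> inv a = h \<otimes> (a \<otimes> b \<otimes> inv a) \<otimes> inv h"
proof -
  have hi: "inv h \<otimes> inv a = inv a \<otimes> inv h"
  proof -
    have "inv h \<otimes> inv a = inv (a \<otimes> h)" using c by (simp add: inv_mult_group)
    also have "\<dots> = inv (h \<otimes> a)" using ha by simp
    also have "\<dots> = inv a \<otimes> inv h" using c by (simp add: inv_mult_group)
    finally show ?thesis .
  qed
  have "a \<otimes> (h \<otimes> b \<otimes> inv h) \<otimes> inv a = (a \<otimes> h) \<otimes> b \<otimes> (inv h \<otimes> inv a)" using c by (simp add: m_assoc)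
  also have "\<dots> = (h \<otimes> a) \<otimes> b \<otimes> (inv a \<otimes> inv h)" using ha hi by simp
  also have "\<dots> = h \<otimes> (a \<otimes> b \<otimes> inv a) \<otimes> inv h" using c by (simp add: m_assoc)
  finally show ?thesis .
qed

lemma conj_prod_lemma:
  assumes c: "h \<in> carrier G" "a \<in> carrier G" "b \<in> carrier G" and ha: "h \<otimes> a = a \<otimes> h"
  shows "h \<otimes> (a \<otimes> b) \<otimes> inv h = a \<otimes> (h \<otimes> b \<otimes> inv h)"
  using c ha by (simp add: m_assoc[symmetric])

lemma comm_commutator: "a \<in> carrier G \<Longrightarrow> b \<in> carrier G \<Longrightarrow> a \<otimes> b = b \<otimes> a \<Longrightarrow> a \<otimes> b \<otimes> inv a \<otimes> inv b = \<one>"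
proof -
  assume c: "a \<in> carrier G" "b \<in> carrier G" and ab: "a \<otimes> b = b \<otimes> a"
  have "a \<otimes> b \<otimes> inv a \<otimes> inv b = b \<otimes> a \<otimes> inv a \<otimes> inv b" using ab by simp
  also have "\<dots> = \<one>" using c by (simp add: m_assoc)
  finally show ?thesis .
qed

lemma eq_div_one: "a \<in> carrier G \<Longrightarrow> a \<otimes> inv a = \<one>"
  by simp
end
lemma cadj_nth[simp]: "cadj A $ i $ j = cnj (A $ j $ i)"
  by (simp add: cadj_def)

lemma cadj_mult: "cadj (A ** B) = cadj B ** cadj A"
  by (simp add: vec_eq_iff matrix_matrix_mult_def cadj_def mult.commute)

lemma cadj_cadj[simp]: "cadj (cadj A) = A"
  by (simp add: vec_eq_iff)

lemma cadj_one[simp]: "cadj (mat 1 :: complex^'n^'n) = mat 1"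
  by (simp add: vec_eq_iff mat_def)

lemma matgrp_simps[simp]: "carrier (matgrp S) = S" "mult (matgrp S) = (**)" "one (matgrp S) = mat 1"
  by (simp_all add: matgrp_def)

lemma SU_mult: "A \<in> SU_set \<Longrightarrow> B \<in> SU_set \<Longrightarrow> A ** B \<in> SU_set"
proof -
  assume A: "A \<in> SU_set" and B: "B \<in> SU_set"
  have "A ** B ** cadj (A ** B) = A ** (B ** cadj B) ** cadj A"
    by (simp add: cadj_mult matrix_mul_assoc)
  also have "\<dots> = mat 1" using A B by (simp add: SU_set_def)
  finally show ?thesis using A B by (simp add: SU_set_def det_mul)
qed

lemma SU_cadj: "A \<in> SU_set \<Longrightarrow> cadj A \<in> SU_set"
proof -
  assume A: "A \<in> SU_set"
  then have 1: "A ** cadj A = mat 1" by (simp add: SU_set_def)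
  then have 2: "cadj A ** A = mat 1" by (rule matrix_left_right_inverse1)
  have "det A * det (cadj A) = 1" using 1 det_mul[of A "cadj A"] by simp
  then have "det (cadj A) = 1" using A by (simp add: SU_set_def)
  then show ?thesis using 2 by (simp add: SU_set_def)
qed

lemma SU_one: "mat 1 \<in> SU_set"
  by (simp add: SU_set_def)

lemma SU_linv: "A \<in> SU_set \<Longrightarrow> cadj A ** A = mat 1"
  by (simp add: SU_set_def matrix_left_right_inverse)

lemma SU_rinv: "A \<in> SU_set \<Longrightarrow> A ** cadj A = mat 1"
  by (simp add: SU_set_def)

lemma group_SU: "group (matgrp (SU_set :: (complex^'n::finite^'n) set))"
  by (rule groupI) (auto simp: SU_mult SU_one matrix_mul_assoc intro!: bexI[of _ "cadj _"] SU_cadj SU_linv)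

lemma inv_SU: "A \<in> SU_set \<Longrightarrow> inv\<^bsub>matgrp SU_set\<^esub> A = cadj A"
  by (rule group.inv_equality[OF group_SU]) (auto simp: SU_linv SU_cadj)

lemma Sp2_mult: "A \<in> Sp2_set \<Longrightarrow> B \<in> Sp2_set \<Longrightarrow> A ** B \<in> Sp2_set"
proof -
  assume A: "A \<in> Sp2_set" and B: "B \<in> Sp2_set"
  have "A ** B ** cadj (A ** B) = A ** (B ** cadj B) ** cadj A"
    by (simp add: cadj_mult matrix_mul_assoc)
  also have "\<dots> = mat 1" using A B by (simp add: Sp2_set_def)
  finally have 1: "A ** B ** cadj (A ** B) = mat 1" .
  have "transpose (A ** B) ** J4 ** (A ** B) = transpose B ** (transpose A ** J4 ** A) ** B"
    by (simp add: matrix_transpose_mul matrix_mul_assoc)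
  also have "\<dots> = J4" using A B by (simp add: Sp2_set_def)
  finally show ?thesis using 1 by (simp add: Sp2_set_def)
qed

lemma Sp2_cadj: "A \<in> Sp2_set \<Longrightarrow> cadj A \<in> Sp2_set"
proof -
  assume A: "A \<in> Sp2_set"
  then have 1: "A ** cadj A = mat 1" by (simp add: Sp2_set_def)
  then have 2: "cadj A ** A = mat 1" by (rule matrix_left_right_inverse1)
  have "transpose (cadj A) ** J4 ** cadj A = transpose (cadj A) ** (transpose A ** J4 ** A) ** cadj A"
    using A by (simp add: Sp2_set_def)
  also have "\<dots> = transpose (A ** cadj A) ** J4 ** (A ** cadj A)"
    by (simp add: matrix_transpose_mul matrix_mul_assoc)
  also have "\<dots> = J4" using 1 by simp
  finally show ?thesis using 2 by (simp add: Sp2_set_def)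
qed

lemma Sp2_one: "mat 1 \<in> Sp2_set"
  by (simp add: Sp2_set_def)

lemma Sp2_linv: "A \<in> Sp2_set \<Longrightarrow> cadj A ** A = mat 1"
  by (simp add: Sp2_set_def matrix_left_right_inverse)

lemma group_Sp2: "group Sp2"
  by (rule groupI) (auto simp: Sp2_mult Sp2_one matrix_mul_assoc intro!: bexI[of _ "cadj _"] Sp2_cadj Sp2_linv)

lemma inv_Sp2: "A \<in> Sp2_set \<Longrightarrow> inv\<^bsub>Sp2\<^esub> A = cadj A"
  by (rule group.inv_equality[OF group_Sp2]) (auto simp: Sp2_linv Sp2_cadj)
definition mk3 :: "complex \<Rightarrow> complex \<Rightarrow> complex \<Rightarrow> complex \<Rightarrow> complex \<Rightarrow> complex \<Rightarrow> complex \<Rightarrow> complex \<Rightarrow> complex \<Rightarrow> complex^3^3" where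
  "mk3 a11 a12 a13 a21 a22 a23 a31 a32 a33 = (\<chi> i j.
     if i = 1 then (if j = 1 then a11 else if j = 2 then a12 else a13)
     else if i = 2 then (if j = 1 then a21 else if j = 2 then a22 else a23)
     else (if j = 1 then a31 else if j = 2 then a32 else a33))"

lemma mk3_nth[simp]:
  "mk3 a11 a12 a13 a21 a22 a23 a31 a32 a33 $ 1 $ 1 = a11"
  "mk3 a11 a12 a13 a21 a22 a23 a31 a32 a33 $ 1 $ 2 = a12"
  "mk3 a11 a12 a13 a21 a22 a23 a31 a32 a33 $ 1 $ 3 = a13"
  "mk3 a11 a12 a13 a21 a22 a23 a31 a32 a33 $ 2 $ 1 = a21"
  "mk3 a11 a12 a13 a21 a22 a23 a31 a32 a33 $ 2 $ 2 = a22"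
  "mk3 a11 a12 a13 a21 a22 a23 a31 a32 a33 $ 2 $ 3 = a23"
  "mk3 a11 a12 a13 a21 a22 a23 a31 a32 a33 $ 3 $ 1 = a31"
  "mk3 a11 a12 a13 a21 a22 a23 a31 a32 a33 $ 3 $ 2 = a32"
  "mk3 a11 a12 a13 a21 a22 a23 a31 a32 a33 $ 3 $ 3 = a33"
  by (simp_all add: mk3_def)

lemma mm3: "((A::complex^3^3) ** B) $ i $ j = A$i$1*B$1$j + A$i$2*B$2$j + A$i$3*B$3$j"
  by (simp add: matrix_matrix_mult_def sum_3)

lemma eq3: "(A::complex^3^3) = B \<longleftrightarrow> A$1$1 = B$1$1 \<and> A$1$2 = B$1$2 \<and> A$1$3 = B$1$3 \<and>
   A$2$1 = B$2$1 \<and> A$2$2 = B$2$2 \<and> A$2$3 = B$2$3 \<and> A$3$1 = B$3$1 \<and> A$3$2 = B$3$2 \<and> A$3$3 = B$3$3"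
  by (simp add: vec_eq_iff forall_3)

lemma mat1_nth: "(mat 1 :: complex^'n^'n) $ i $ j = (if i = j then 1 else 0)"
  by (simp add: mat_def)

lemma rows_SU: "A \<in> SU_set \<Longrightarrow> (A ** cadj A) $ i $ j = (if i = j then 1 else 0)"
  by (simp add: SU_rinv mat1_nth)
lemma cols_SU: "A \<in> SU_set \<Longrightarrow> (cadj A ** A) $ i $ j = (if i = j then 1 else 0)"
  by (simp add: SU_linv mat1_nth)

lemma nsq: "a * cnj a = complex_of_real ((cmod a)\<^sup>2)"
  by (rule complex_norm_square[symmetric])

lemma nsq_zero: "a * cnj a = 0 \<longleftrightarrow> a = 0"
  by simp

lemma nsq_sum_zero: "a * cnj a + b * cnj b = 0 \<Longrightarrow> a = 0"
proof -
  assume "a * cnj a + b * cnj b = 0"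
  then have "complex_of_real ((cmod a)\<^sup>2 + (cmod b)\<^sup>2) = 0" by (simp add: nsq)
  then have "(cmod a)\<^sup>2 + (cmod b)\<^sup>2 = 0" by (simp only: of_real_eq_0_iff)
  then show "a = 0" by (simp add: add_nonneg_eq_0_iff)
qed

lemma SU3_mk3I:
  assumes "mk3 a11 a12 a13 a21 a22 a23 a31 a32 a33 ** cadj (mk3 a11 a12 a13 a21 a22 a23 a31 a32 a33) = mat 1"
    and "det (mk3 a11 a12 a13 a21 a22 a23 a31 a32 a33) = 1"
  shows "mk3 a11 a12 a13 a21 a22 a23 a31 a32 a33 \<in> SU_set"
  using assms by (simp add: SU_set_def)

abbreviation dg3 :: "complex \<Rightarrow> complex \<Rightarrow> complex \<Rightarrow> complex^3^3" where
  "dg3 a b c \<equiv> mk3 a 0 0 0 b 0 0 0 c"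

lemma dg3_SU: "a * cnj a = 1 \<Longrightarrow> b * cnj b = 1 \<Longrightarrow> c * cnj c = 1 \<Longrightarrow> a * b * c = 1 \<Longrightarrow> dg3 a b c \<in> SU_set"
  by (rule SU3_mk3I) (simp_all add: eq3 mm3 mat1_nth det_3)

lemma G1_iff: "A \<in> SU3_G1 \<longleftrightarrow> A \<in> SU_set \<and> A$1$3 = 0 \<and> A$2$3 = 0 \<and> A$3$1 = 0 \<and> A$3$2 = 0 \<and> A$3$3 = 1"
  by (simp add: SU3_G1_def)
lemma G2_iff: "A \<in> SU3_G2 \<longleftrightarrow> A \<in> SU_set \<and> A$1$1 = 1 \<and> A$1$2 = 0 \<and> A$1$3 = 0 \<and> A$2$1 = 0 \<and> A$3$1 = 0"
  by (simp add: SU3_G2_def)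

lemma G2_mult: "A \<in> SU3_G2 \<Longrightarrow> B \<in> SU3_G2 \<Longrightarrow> A ** B \<in> SU3_G2"
  by (simp add: G2_iff SU_mult mm3)
lemma G2_cadj: "A \<in> SU3_G2 \<Longrightarrow> cadj A \<in> SU3_G2"
  by (simp add: G2_iff SU_cadj)
lemma G1_mult: "A \<in> SU3_G1 \<Longrightarrow> B \<in> SU3_G1 \<Longrightarrow> A ** B \<in> SU3_G1"
  by (simp add: G1_iff SU_mult mm3)
lemma G1_cadj: "A \<in> SU3_G1 \<Longrightarrow> cadj A \<in> SU3_G1"
  by (simp add: G1_iff SU_cadj)

lemma ii_cnj: "\<i> * cnj \<i> = 1" by simp
definition "t3c = dg3 1 \<i> (-\<i>)"
definition "z3c = dg3 (-1) (-1) 1"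
definition "x3c = dg3 \<i> (-\<i>) 1"
definition "n3c = mk3 0 1 0 (-1) 0 0 0 0 1"
definition "r3c = mk3 1 0 0 0 0 1 0 (-1) 0"

lemma t3c_G2: "t3c \<in> SU3_G2"
  unfolding t3c_def by (simp add: G2_iff dg3_SU)
lemma z3c_G1: "z3c \<in> SU3_G1"
  unfolding z3c_def by (simp add: G1_iff dg3_SU)
lemma x3c_G1: "x3c \<in> SU3_G1"
  unfolding x3c_def by (simp add: G1_iff dg3_SU)
lemma n3c_G1: "n3c \<in> SU3_G1"
  unfolding n3c_def by (simp add: G1_iff SU3_mk3I eq3 mm3 mat1_nth det_3)
lemma r3c_G2: "r3c \<in> SU3_G2"
  unfolding r3c_def by (simp add: G2_iff SU3_mk3I eq3 mm3 mat1_nth det_3)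

lemma SU3_PA: "y \<in> SU3_G2 \<Longrightarrow> z3c ** y ** cadj z3c = t3c ** y ** cadj t3c"
  unfolding z3c_def t3c_def by (simp add: eq3 mm3 G2_iff algebra_simps)

lemma SU3_comm_t: "y \<in> SU3_G2 \<Longrightarrow> (y ** t3c = t3c ** y \<longleftrightarrow> y$2$3 = 0 \<and> y$3$2 = 0)"
  unfolding t3c_def by (auto simp: eq3 mm3 G2_iff)

definition isd3 :: "complex^3^3 \<Rightarrow> bool" where
  "isd3 y \<longleftrightarrow> y \<in> SU_set \<and> y$1$2 = 0 \<and> y$1$3 = 0 \<and> y$2$1 = 0 \<and> y$2$3 = 0 \<and> y$3$1 = 0 \<and> y$3$2 = 0"

lemma isd3_cadj: "isd3 y \<Longrightarrow> isd3 (cadj y)"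
  by (simp add: isd3_def SU_cadj)

lemma isd3_G1: assumes y: "isd3 y" and x: "x \<in> SU3_G1" shows "y ** x ** cadj y \<in> SU3_G1"
proof -
  have r: "(y ** cadj y) $ 3 $ 3 = 1" using y rows_SU[of y 3 3] by (simp add: isd3_def)
  then have "y$3$3 * cnj (y$3$3) = 1" using y by (simp add: mm3 isd3_def)
  then show ?thesis using y x by (simp add: G1_iff mm3 isd3_def SU_mult SU_cadj)
qed

lemma isd3_G2: assumes y: "isd3 y" and x: "x \<in> SU3_G2" shows "y ** x ** cadj y \<in> SU3_G2"
proof -
  have r: "(y ** cadj y) $ 1 $ 1 = 1" using y rows_SU[of y 1 1] by (simp add: isd3_def)
  then have "y$1$1 * cnj (y$1$1) = 1" using y by (simp add: mm3 isd3_def)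
  then show ?thesis using y x by (simp add: G2_iff mm3 isd3_def SU_mult SU_cadj)
qed

lemma SU3_norm_iff:
  assumes y: "y \<in> SU3_G2"
  shows "y \<in> normalizer SU3 SU3_G1 \<longleftrightarrow> y$2$3 = 0 \<and> y$3$2 = 0"
proof -
  have ySU: "y \<in> SU_set" using y by (simp add: G2_iff)
  have sub: "SU3_G1 \<subseteq> carrier SU3" by (auto simp: SU3_G1_def)
  have N: "y \<in> normalizer SU3 SU3_G1 \<longleftrightarrow> (\<lambda>x. y ** x ** cadj y) ` SU3_G1 = SU3_G1"
    using normalizer_iff[OF sub, of y] ySU by (simp add: inv_SU)
  show ?thesis
  proof
    assume "y \<in> normalizer SU3 SU3_G1"
    then have im: "(\<lambda>x. y ** x ** cadj y) ` SU3_G1 = SU3_G1" using N by simp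
    then have "y ** n3c ** cadj y \<in> SU3_G1" using n3c_G1 by blast
    then have a: "y$3$2 = 0" using y unfolding n3c_def by (simp add: G1_iff G2_iff mm3)
    obtain x where x: "x \<in> SU3_G1" "n3c = y ** x ** cadj y" using im n3c_G1 by force
    have "cadj y ** n3c ** y = (cadj y ** y) ** x ** (cadj y ** y)"
      by (subst x(2)) (simp add: matrix_mul_assoc)
    also have "\<dots> = x" using ySU by (simp add: SU_linv)
    finally have "cadj y ** n3c ** y \<in> SU3_G1" using x by simp
    then have b: "y$2$3 = 0" using y unfolding n3c_def by (simp add: G1_iff G2_iff mm3)
    show "y$2$3 = 0 \<and> y$3$2 = 0" using a b by simp
  next
    assume "y$2$3 = 0 \<and> y$3$2 = 0"
    then have d: "isd3 y" using y by (simp add: isd3_def G2_iff)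
    have "(\<lambda>x. y ** x ** cadj y) ` SU3_G1 = SU3_G1"
    proof (intro equalityI subsetI)
      fix w assume "w \<in> (\<lambda>x. y ** x ** cadj y) ` SU3_G1"
      then show "w \<in> SU3_G1" using isd3_G1[OF d] by auto
    next
      fix w assume w: "w \<in> SU3_G1"
      have "y ** (cadj y ** w ** cadj (cadj y)) ** cadj y = (y ** cadj y) ** w ** (y ** cadj y)"
        by (simp add: matrix_mul_assoc)
      then have "w = y ** (cadj y ** w ** cadj (cadj y)) ** cadj y"
        using ySU by (simp add: SU_rinv)
      moreover have "cadj y ** w ** cadj (cadj y) \<in> SU3_G1" using isd3_G1[OF isd3_cadj[OF d] w] .
      ultimately show "w \<in> (\<lambda>x. y ** x ** cadj y) ` SU3_G1" by blast
    qed
    then show "y \<in> normalizer SU3 SU3_G1" using N by simp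
  qed
qed
lemma SU3_PC: "a \<in> SU3_G2 \<Longrightarrow> a$2$3 = 0 \<Longrightarrow> a$3$2 = 0 \<Longrightarrow> b \<in> SU3_G2 \<Longrightarrow> b$2$3 = 0 \<Longrightarrow> b$3$2 = 0 \<Longrightarrow> a ** b = b ** a"
  by (simp add: eq3 mm3 G2_iff mult.commute)

lemma mu_facts: "cis (pi/4) * cnj (cis (pi/4)) = 1" "cis (pi/4) * cis (pi/4) = \<i>"
  "cnj (cis (pi/4)) * cnj (cis (pi/4)) = - \<i>" "cnj (cis (pi/4)) * cis (pi/4) = 1"
proof -
  show "cis (pi/4) * cnj (cis (pi/4)) = 1" by (simp add: cis_cnj cis_mult)
  show 2: "cis (pi/4) * cis (pi/4) = \<i>" by (simp add: cis_mult)
  have "cnj (cis (pi/4)) * cnj (cis (pi/4)) = cnj (cis (pi/4) * cis (pi/4))" by simp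
  then show "cnj (cis (pi/4)) * cnj (cis (pi/4)) = - \<i>" using 2 by simp
  show "cnj (cis (pi/4)) * cis (pi/4) = 1" by (simp add: cis_cnj cis_mult)
qed

lemma SU3_rigid: "rigid SU3 SU3_G1 SU3_G2 t3c (T::'h itself)"
  unfolding rigid_def
proof (intro allI impI)
  fix H :: "'h monoid" and \<pi> h s
  assume H: "group H" and hom: "\<pi> \<in> hom SU3 H"
    and kX: "\<forall>x\<in>SU3_G1. \<pi> x = one H \<longrightarrow> (\<forall>x'\<in>SU3_G1. x \<otimes>\<^bsub>SU3\<^esub> x' = x' \<otimes>\<^bsub>SU3\<^esub> x)"
    and kY: "\<forall>y\<in>SU3_G2. \<pi> y = one H \<longrightarrow> (\<forall>y'\<in>SU3_G2. y \<otimes>\<^bsub>SU3\<^esub> y' = y' \<otimes>\<^bsub>SU3\<^esub> y)"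
    and h: "h \<in> carrier H" and s: "s \<in> SU3_G2"
    and hX: "\<forall>x\<in>SU3_G1. mult H h (\<pi> x) = mult H (\<pi> x) h"
    and hY: "\<forall>y\<in>SU3_G2. mult H (mult H h (\<pi> y)) (m_inv H h) = \<pi> (s \<otimes>\<^bsub>SU3\<^esub> y \<otimes>\<^bsub>SU3\<^esub> inv\<^bsub>SU3\<^esub> s)"
  have gh: "group_hom SU3 H \<pi>" using group_SU H hom by (simp add: group_hom_def group_hom_axioms_def)
  have pm: "\<And>A B. A \<in> SU_set \<Longrightarrow> B \<in> SU_set \<Longrightarrow> \<pi> (A ** B) = \<pi> A \<otimes>\<^bsub>H\<^esub> \<pi> B"
    using group_hom.hom_mult[OF gh] by simp
  have pi: "\<And>A. A \<in> SU_set \<Longrightarrow> \<pi> (cadj A) = inv\<^bsub>H\<^esub> \<pi> A"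
    using group_hom.hom_inv[OF gh] by (simp add: inv_SU)
  have pc: "\<And>A. A \<in> SU_set \<Longrightarrow> \<pi> A \<in> carrier H"
    using group_hom.hom_closed[OF gh] by simp
  have G1S: "\<And>A. A \<in> SU3_G1 \<Longrightarrow> A \<in> SU_set" by (simp add: G1_iff)
  have G2S: "\<And>A. A \<in> SU3_G2 \<Longrightarrow> A \<in> SU_set" by (simp add: G2_iff)
  have sS: "s \<in> SU_set" using s G2S by simp
  have hY': "\<And>y. y \<in> SU3_G2 \<Longrightarrow> h \<otimes>\<^bsub>H\<^esub> \<pi> y \<otimes>\<^bsub>H\<^esub> inv\<^bsub>H\<^esub> h = \<pi> (s ** y ** cadj s)"
    using hY sS by (simp add: inv_SU)
  have kX': "x ** x' = x' ** x" if "x \<in> SU3_G1" "\<pi> x = \<one>\<^bsub>H\<^esub>" "x' \<in> SU3_G1" for x x'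
  proof -
    have "x \<otimes>\<^bsub>SU3\<^esub> x' = x' \<otimes>\<^bsub>SU3\<^esub> x" using kX that by blast
    then show ?thesis by simp
  qed
  have kY': "y ** y' = y' ** y" if "y \<in> SU3_G2" "\<pi> y = \<one>\<^bsub>H\<^esub>" "y' \<in> SU3_G2" for y y'
  proof -
    have "y \<otimes>\<^bsub>SU3\<^esub> y' = y' \<otimes>\<^bsub>SU3\<^esub> y" using kY that by blast
    then show ?thesis by simp
  qed
  have hX': "\<And>x. x \<in> SU3_G1 \<Longrightarrow> h \<otimes>\<^bsub>H\<^esub> \<pi> x = \<pi> x \<otimes>\<^bsub>H\<^esub> h" using hX by simp
  have rows: "\<And>i j. (s ** cadj s) $ i $ j = (if i = j then 1 else 0)" using rows_SU[OF sS] .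
  have s0: "s$1$1 = 1" "s$1$2 = 0" "s$1$3 = 0" "s$2$1 = 0" "s$3$1 = 0" using s by (simp_all add: G2_iff)
  have r23: "s$2$2 * cnj (s$3$2) + s$2$3 * cnj (s$3$3) = 0" using rows[of 2 3] s0 by (simp add: mm3)
  have r22: "s$2$2 * cnj (s$2$2) + s$2$3 * cnj (s$2$3) = 1" using rows[of 2 2] s0 by (simp add: mm3)
  have r33: "s$3$2 * cnj (s$3$2) + s$3$3 * cnj (s$3$3) = 1" using rows[of 3 3] s0 by (simp add: mm3)
  define y' where "y' = s ** t3c ** cadj s"
  have y'G2: "y' \<in> SU3_G2" unfolding y'_def using s t3c_G2 by (simp add: G2_mult G2_cadj)
  have py': "\<pi> y' = h \<otimes>\<^bsub>H\<^esub> \<pi> t3c \<otimes>\<^bsub>H\<^esub> inv\<^bsub>H\<^esub> h" using hY'[OF t3c_G2] y'_def by simp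
  have xt: "x3c ** t3c = t3c ** x3c" unfolding x3c_def t3c_def by (simp add: eq3 mm3)
  have x3S: "x3c \<in> SU_set" using x3c_G1 G1S by simp
  have t3S: "t3c \<in> SU_set" using t3c_G2 G2S by simp
  have y'S: "y' \<in> SU_set" using y'G2 G2S by simp
  have "\<pi> x3c \<otimes>\<^bsub>H\<^esub> \<pi> t3c = \<pi> t3c \<otimes>\<^bsub>H\<^esub> \<pi> x3c" using xt pm x3S t3S by metis
  then have "\<pi> x3c \<otimes>\<^bsub>H\<^esub> \<pi> y' = \<pi> y' \<otimes>\<^bsub>H\<^esub> \<pi> x3c"
    unfolding py' using group.conj_comm_lemma[OF H h pc[OF x3S] pc[OF t3S] hX'[OF x3c_G1]] by simp
  then have "\<pi> x3c \<otimes>\<^bsub>H\<^esub> \<pi> y' \<otimes>\<^bsub>H\<^esub> inv\<^bsub>H\<^esub> \<pi> x3c \<otimes>\<^bsub>H\<^esub> inv\<^bsub>H\<^esub> \<pi> y' = \<one>\<^bsub>H\<^esub>"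
    using group.comm_commutator[OF H pc[OF x3S] pc[OF y'S]] by simp
  moreover define e where "e = x3c ** y' ** cadj x3c ** cadj y'"
  ultimately have pe: "\<pi> e = \<one>\<^bsub>H\<^esub>" by (simp add: e_def pm pi x3S y'S SU_mult SU_cadj)
  have isdx: "isd3 x3c" unfolding isd3_def using x3S by (simp add: x3c_def)
  have eG2: "e \<in> SU3_G2" unfolding e_def using isd3_G2[OF isdx y'G2] G2_cadj[OF y'G2] G2_mult by blast
  have et: "e ** t3c = t3c ** e" using kY'[OF eG2 pe t3c_G2] .
  have er: "e ** r3c = r3c ** e" using kY'[OF eG2 pe r3c_G2] .
  have e23: "e$2$3 = 0" and e32: "e$3$2 = 0" using et SU3_comm_t[OF eG2] by auto
  have e0: "e$1$1 = 1" "e$1$2 = 0" "e$1$3 = 0" "e$2$1 = 0" "e$3$1 = 0" using eG2 by (simp_all add: G2_iff)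
  have e2233: "e$2$2 = e$3$3" using arg_cong[OF er, of "\<lambda>A. A$2$3"] e0 e23 e32 unfolding r3c_def by (simp add: mm3)
  have "det e = 1" using eG2 by (simp add: G2_iff SU_set_def)
  then have esq: "e$2$2 * e$2$2 = 1" using e0 e23 e32 e2233 by (simp add: det_3)
  have "e ** y' = x3c ** y' ** cadj x3c ** (cadj y' ** y')" by (simp add: e_def matrix_mul_assoc)
  then have ey: "e ** y' = x3c ** y' ** cadj x3c" using y'S by (simp add: SU_linv)
  have "(e ** y') $ 2 $ 3 = e$2$2 * y'$2$3" using e0 e23 by (simp add: mm3)
  moreover have "(x3c ** y' ** cadj x3c) $ 2 $ 3 = - \<i> * y'$2$3" unfolding x3c_def by (simp add: mm3)
  ultimately have q: "e$2$2 * y'$2$3 = - \<i> * y'$2$3" using ey by simp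
  have "(e$2$2 + \<i>) * y'$2$3 = 0" unfolding distrib_right q by simp
  moreover have "e$2$2 + \<i> \<noteq> 0"
  proof
    assume "e$2$2 + \<i> = 0"
    then have "e$2$2 = - \<i>" by (simp only: eq_neg_iff_add_eq_0)
    then show False using esq by simp
  qed
  ultimately have y23: "y'$2$3 = 0" by simp
  have "y'$2$3 = s$2$2 * \<i> * cnj (s$3$2) + s$2$3 * (- \<i>) * cnj (s$3$3)"
    unfolding y'_def t3c_def using s0 by (simp add: mm3)
  then have "\<i> * (s$2$2 * cnj (s$3$2) - s$2$3 * cnj (s$3$3)) = 0" using y23
    by (simp add: right_diff_distrib mult.commute mult.left_commute)
  then have PQ: "s$2$2 * cnj (s$3$2) = s$2$3 * cnj (s$3$3)" by simp
  then have "s$2$2 * cnj (s$3$2) + s$2$2 * cnj (s$3$2) = 0" using r23 by simp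
  then have A: "s$2$2 * cnj (s$3$2) = 0" by simp
  then have B: "s$2$3 * cnj (s$3$3) = 0" using PQ by simp
  show "s \<otimes>\<^bsub>SU3\<^esub> t3c = t3c \<otimes>\<^bsub>SU3\<^esub> s"
  proof (cases "s$3$2 = 0")
    case True
    then have "s$3$3 * cnj (s$3$3) = 1" using r33 by simp
    then have "s$3$3 \<noteq> 0" by auto
    then have "s$2$3 = 0" using B by simp
    then show ?thesis using True SU3_comm_t[OF s] by simp
  next
    case False
    then have s22: "s$2$2 = 0" using A by simp
    then have "s$2$3 * cnj (s$2$3) = 1" using r22 by simp
    then have "s$2$3 \<noteq> 0" by auto
    then have s33: "s$3$3 = 0" using B by simp
    have n23: "s$2$3 * cnj (s$2$3) = 1" using r22 s22 by simp
    have n32: "s$3$2 * cnj (s$3$2) = 1" using r33 s33 by simp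
    define \<mu> where "\<mu> = cis (pi/4)"
    have mu: "\<mu> * cnj \<mu> = 1" "\<mu> * \<mu> = \<i>" "cnj \<mu> * cnj \<mu> = - \<i>" "cnj \<mu> * \<mu> = 1"
      using mu_facts unfolding \<mu>_def by auto
    define d where "d = dg3 1 \<mu> (cnj \<mu>)"
    define d' where "d' = dg3 1 (cnj \<mu>) \<mu>"
    define xm where "xm = dg3 \<mu> (cnj \<mu>) 1"
    define xm' where "xm' = dg3 (cnj \<mu>) \<mu> 1"
    have dG2: "d \<in> SU3_G2" unfolding d_def using mu by (simp add: G2_iff dg3_SU)
    have d'G2: "d' \<in> SU3_G2" unfolding d'_def using mu by (simp add: G2_iff dg3_SU mult.commute)
    have xmG1: "xm \<in> SU3_G1" unfolding xm_def using mu by (simp add: G1_iff dg3_SU)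
    have xm'G1: "xm' \<in> SU3_G1" unfolding xm'_def using mu by (simp add: G1_iff dg3_SU mult.commute)
    have sd: "s ** d ** cadj s = d'"
    proof -
      have "s$2$3 * cnj \<mu> * cnj (s$2$3) = cnj \<mu>" using n23 by (simp add: algebra_simps)
      moreover have "s$3$2 * \<mu> * cnj (s$3$2) = \<mu>" using n32 by (simp add: algebra_simps)
      ultimately show ?thesis unfolding d_def d'_def using s0 s22 s33 by (simp add: eq3 mm3)
    qed
    have nd: "n3c ** d ** cadj n3c = xm ** d" unfolding n3c_def d_def xm_def using mu by (simp add: eq3 mm3)
    have nd': "n3c ** d' ** cadj n3c = xm' ** d'" unfolding n3c_def d'_def xm'_def using mu by (simp add: eq3 mm3)
    have xx: "xm ** cadj xm' = x3c" unfolding xm_def xm'_def x3c_def using mu by (simp add: eq3 mm3)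
    have dS: "d \<in> SU_set" "d' \<in> SU_set" using dG2 d'G2 G2S by auto
    have xS: "xm \<in> SU_set" "xm' \<in> SU_set" using xmG1 xm'G1 G1S by auto
    have nS: "n3c \<in> SU_set" using n3c_G1 G1S by auto
    have pd': "\<pi> d' = h \<otimes>\<^bsub>H\<^esub> \<pi> d \<otimes>\<^bsub>H\<^esub> inv\<^bsub>H\<^esub> h" using hY'[OF dG2] sd by simp
    have "\<pi> n3c \<otimes>\<^bsub>H\<^esub> \<pi> d' \<otimes>\<^bsub>H\<^esub> inv\<^bsub>H\<^esub> \<pi> n3c = \<pi> xm' \<otimes>\<^bsub>H\<^esub> \<pi> d'"
      using arg_cong[OF nd', of \<pi>] by (simp add: pm pi nS dS xS SU_mult SU_cadj)
    moreover have "\<pi> n3c \<otimes>\<^bsub>H\<^esub> \<pi> d' \<otimes>\<^bsub>H\<^esub> inv\<^bsub>H\<^esub> \<pi> n3c = \<pi> xm \<otimes>\<^bsub>H\<^esub> \<pi> d'"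
    proof -
      have "\<pi> n3c \<otimes>\<^bsub>H\<^esub> \<pi> d' \<otimes>\<^bsub>H\<^esub> inv\<^bsub>H\<^esub> \<pi> n3c
          = h \<otimes>\<^bsub>H\<^esub> (\<pi> n3c \<otimes>\<^bsub>H\<^esub> \<pi> d \<otimes>\<^bsub>H\<^esub> inv\<^bsub>H\<^esub> \<pi> n3c) \<otimes>\<^bsub>H\<^esub> inv\<^bsub>H\<^esub> h"
        unfolding pd' using group.conj_conj_lemma[OF H h pc[OF nS] pc[OF dS(1)] hX'[OF n3c_G1]] .
      also have "\<pi> n3c \<otimes>\<^bsub>H\<^esub> \<pi> d \<otimes>\<^bsub>H\<^esub> inv\<^bsub>H\<^esub> \<pi> n3c = \<pi> xm \<otimes>\<^bsub>H\<^esub> \<pi> d"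
        using arg_cong[OF nd, of \<pi>] by (simp add: pm pi nS dS xS SU_mult SU_cadj)
      also have "h \<otimes>\<^bsub>H\<^esub> (\<pi> xm \<otimes>\<^bsub>H\<^esub> \<pi> d) \<otimes>\<^bsub>H\<^esub> inv\<^bsub>H\<^esub> h = \<pi> xm \<otimes>\<^bsub>H\<^esub> \<pi> d'"
        unfolding pd' using group.conj_prod_lemma[OF H h pc[OF xS(1)] pc[OF dS(1)] hX'[OF xmG1]] .
      finally show ?thesis .
    qed
    ultimately have "\<pi> xm' \<otimes>\<^bsub>H\<^esub> \<pi> d' = \<pi> xm \<otimes>\<^bsub>H\<^esub> \<pi> d'" by simp
    then have "\<pi> xm' = \<pi> xm" using group.right_cancel[OF H] pc xS dS by blast
    then have "\<pi> (xm ** cadj xm') = \<one>\<^bsub>H\<^esub>" by (simp add: pm pi xS SU_cadj pc group.r_inv[OF H])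
    then have "\<pi> x3c = \<one>\<^bsub>H\<^esub>" using xx by simp
    then have "x3c ** n3c = n3c ** x3c" using kX'[OF x3c_G1 _ n3c_G1] by simp
    then have False unfolding x3c_def n3c_def by (simp add: eq3 mm3 complex_eq_iff)
    then show ?thesis ..
  qed
qed
lemma good_SU3_12: "good SU3 SU3_G1 SU3_G2 (T::'h itself)"
  unfolding good_def
proof (intro exI conjI)
  show "z3c \<in> SU3_G1" by (rule z3c_G1)
  show "t3c \<in> SU3_G2" by (rule t3c_G2)
  show "\<forall>y\<in>SU3_G2. z3c \<otimes>\<^bsub>SU3\<^esub> y \<otimes>\<^bsub>SU3\<^esub> inv\<^bsub>SU3\<^esub> z3c = t3c \<otimes>\<^bsub>SU3\<^esub> y \<otimes>\<^bsub>SU3\<^esub> inv\<^bsub>SU3\<^esub> t3c"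
    using z3c_G1 t3c_G2 by (simp add: G1_iff G2_iff inv_SU SU3_PA)
  show "SU3_G2 \<inter> normalizer SU3 SU3_G1 = {y \<in> SU3_G2. y \<otimes>\<^bsub>SU3\<^esub> t3c = t3c \<otimes>\<^bsub>SU3\<^esub> y}"
    using SU3_norm_iff SU3_comm_t by auto
  show "\<forall>a\<in>SU3_G2 \<inter> normalizer SU3 SU3_G1. \<forall>b\<in>SU3_G2 \<inter> normalizer SU3 SU3_G1. a \<otimes>\<^bsub>SU3\<^esub> b = b \<otimes>\<^bsub>SU3\<^esub> a"
    using SU3_norm_iff SU3_PC by auto
  show "rigid SU3 SU3_G1 SU3_G2 t3c T" by (rule SU3_rigid)
qed

definition "w3c = mk3 0 0 1 0 (-1) 0 1 0 0"

lemma w3c_SU: "w3c \<in> SU_set"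
  unfolding w3c_def by (simp add: SU3_mk3I eq3 mm3 mat1_nth det_3)

definition "phiw A = w3c ** A ** cadj w3c"

lemma phiw_iso: "phiw \<in> iso SU3 SU3"
proof -
  have wl: "cadj w3c ** w3c = mat 1" using SU_linv[OF w3c_SU] .
  have wr: "w3c ** cadj w3c = mat 1" using SU_rinv[OF w3c_SU] .
  have cl: "\<And>A. A \<in> SU_set \<Longrightarrow> phiw A \<in> SU_set" unfolding phiw_def
    using w3c_SU by (simp add: SU_mult SU_cadj)
  have hom: "phiw \<in> hom SU3 SU3"
  proof (rule homI)
    fix A B :: "complex^3^3" assume "A \<in> carrier SU3" "B \<in> carrier SU3"
    have "phiw A ** phiw B = w3c ** A ** (cadj w3c ** w3c) ** B ** cadj w3c"
      unfolding phiw_def by (simp add: matrix_mul_assoc)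
    also have "\<dots> = phiw (A ** B)" unfolding phiw_def wl by (simp add: matrix_mul_assoc)
    finally show "phiw (A \<otimes>\<^bsub>SU3\<^esub> B) = phiw A \<otimes>\<^bsub>SU3\<^esub> phiw B" by simp
  qed (use cl in simp)
  have bij: "bij_betw phiw SU_set SU_set"
  proof (rule bij_betw_byWitness[where f' = "\<lambda>A. cadj w3c ** A ** w3c"])
    show "\<forall>a\<in>SU_set. cadj w3c ** phiw a ** w3c = a"
    proof
      fix a :: "complex^3^3"
      have "cadj w3c ** phiw a ** w3c = (cadj w3c ** w3c) ** a ** (cadj w3c ** w3c)"
        unfolding phiw_def by (simp add: matrix_mul_assoc)
      then show "cadj w3c ** phiw a ** w3c = a" by (simp add: wl)
    qed
    show "\<forall>a'\<in>SU_set. phiw (cadj w3c ** a' ** w3c) = a'"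
    proof
      fix a :: "complex^3^3"
      have "phiw (cadj w3c ** a ** w3c) = (w3c ** cadj w3c) ** a ** (w3c ** cadj w3c)"
        unfolding phiw_def by (simp add: matrix_mul_assoc)
      then show "phiw (cadj w3c ** a ** w3c) = a" by (simp add: wr)
    qed
    show "phiw ` SU_set \<subseteq> SU_set" using cl by auto
    show "(\<lambda>A. cadj w3c ** A ** w3c) ` SU_set \<subseteq> SU_set" using w3c_SU by (auto simp: SU_mult SU_cadj)
  qed
  show ?thesis using hom bij by (simp add: iso_def)
qed

lemma phiw_inv_eq: "phiw (cadj w3c ** A ** w3c) = A"
proof -
  have "phiw (cadj w3c ** A ** w3c) = (w3c ** cadj w3c) ** A ** (w3c ** cadj w3c)"
    unfolding phiw_def by (simp add: matrix_mul_assoc)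
  then show ?thesis by (simp add: SU_rinv[OF w3c_SU])
qed

lemma phiw_G1: "phiw ` SU3_G1 = SU3_G2"
proof (intro equalityI subsetI)
  fix y assume "y \<in> phiw ` SU3_G1"
  then obtain x where x: "x \<in> SU3_G1" "y = phiw x" by auto
  then show "y \<in> SU3_G2" unfolding phiw_def using w3c_SU
    by (simp add: G1_iff G2_iff SU_mult SU_cadj) (simp add: w3c_def mm3)
next
  fix y assume y: "y \<in> SU3_G2"
  have "cadj w3c ** y ** w3c \<in> SU3_G1" using y w3c_SU
    by (simp add: G1_iff G2_iff SU_mult SU_cadj) (simp add: w3c_def mm3)
  then show "y \<in> phiw ` SU3_G1" using phiw_inv_eq[of y] by (metis image_eqI)
qed

lemma phiw_G2: "phiw ` SU3_G2 = SU3_G1"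
proof (intro equalityI subsetI)
  fix y assume "y \<in> phiw ` SU3_G2"
  then obtain x where x: "x \<in> SU3_G2" "y = phiw x" by auto
  then show "y \<in> SU3_G1" unfolding phiw_def using w3c_SU
    by (simp add: G1_iff G2_iff SU_mult SU_cadj) (simp add: w3c_def mm3)
next
  fix y assume y: "y \<in> SU3_G1"
  have "cadj w3c ** y ** w3c \<in> SU3_G2" using y w3c_SU
    by (simp add: G1_iff G2_iff SU_mult SU_cadj) (simp add: w3c_def mm3)
  then show "y \<in> phiw ` SU3_G2" using phiw_inv_eq[of y] by (metis image_eqI)
qed

lemma good_SU3_21: "good SU3 SU3_G2 SU3_G1 (T::'h itself)"
proof -
  have "good SU3 (phiw ` SU3_G1) (phiw ` SU3_G2) T"
    by (rule good_iso[OF group_SU group_SU phiw_iso _ _ good_SU3_12]) (auto simp: G1_iff G2_iff)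
  then show ?thesis by (simp add: phiw_G1 phiw_G2)
qed
definition mk4 :: "complex \<Rightarrow> complex \<Rightarrow> complex \<Rightarrow> complex \<Rightarrow> complex \<Rightarrow> complex \<Rightarrow> complex \<Rightarrow> complex \<Rightarrow> complex \<Rightarrow> complex \<Rightarrow> complex \<Rightarrow> complex \<Rightarrow> complex \<Rightarrow> complex \<Rightarrow> complex \<Rightarrow> complex \<Rightarrow> complex^4^4" where
  "mk4 a11 a12 a13 a14 a21 a22 a23 a24 a31 a32 a33 a34 a41 a42 a43 a44 = (\<chi> i j. if i = 1 then (if j = 1 then a11 else if j = 2 then a12 else if j = 3 then a13 else a14) else if i = 2 then (if j = 1 then a21 else if j = 2 then a22 else if j = 3 then a23 else a24) else if i = 3 then (if j = 1 then a31 else if j = 2 then a32 else if j = 3 then a33 else a34) else (if j = 1 then a41 else if j = 2 then a42 else if j = 3 then a43 else a44))"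

lemma mk4_nth[simp]:
  "mk4 a11 a12 a13 a14 a21 a22 a23 a24 a31 a32 a33 a34 a41 a42 a43 a44 $ 1 $ 1 = a11"
  "mk4 a11 a12 a13 a14 a21 a22 a23 a24 a31 a32 a33 a34 a41 a42 a43 a44 $ 1 $ 2 = a12"
  "mk4 a11 a12 a13 a14 a21 a22 a23 a24 a31 a32 a33 a34 a41 a42 a43 a44 $ 1 $ 3 = a13"
  "mk4 a11 a12 a13 a14 a21 a22 a23 a24 a31 a32 a33 a34 a41 a42 a43 a44 $ 1 $ 4 = a14"
  "mk4 a11 a12 a13 a14 a21 a22 a23 a24 a31 a32 a33 a34 a41 a42 a43 a44 $ 2 $ 1 = a21"
  "mk4 a11 a12 a13 a14 a21 a22 a23 a24 a31 a32 a33 a34 a41 a42 a43 a44 $ 2 $ 2 = a22"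
  "mk4 a11 a12 a13 a14 a21 a22 a23 a24 a31 a32 a33 a34 a41 a42 a43 a44 $ 2 $ 3 = a23"
  "mk4 a11 a12 a13 a14 a21 a22 a23 a24 a31 a32 a33 a34 a41 a42 a43 a44 $ 2 $ 4 = a24"
  "mk4 a11 a12 a13 a14 a21 a22 a23 a24 a31 a32 a33 a34 a41 a42 a43 a44 $ 3 $ 1 = a31"
  "mk4 a11 a12 a13 a14 a21 a22 a23 a24 a31 a32 a33 a34 a41 a42 a43 a44 $ 3 $ 2 = a32"
  "mk4 a11 a12 a13 a14 a21 a22 a23 a24 a31 a32 a33 a34 a41 a42 a43 a44 $ 3 $ 3 = a33"
  "mk4 a11 a12 a13 a14 a21 a22 a23 a24 a31 a32 a33 a34 a41 a42 a43 a44 $ 3 $ 4 = a34"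
  "mk4 a11 a12 a13 a14 a21 a22 a23 a24 a31 a32 a33 a34 a41 a42 a43 a44 $ 4 $ 1 = a41"
  "mk4 a11 a12 a13 a14 a21 a22 a23 a24 a31 a32 a33 a34 a41 a42 a43 a44 $ 4 $ 2 = a42"
  "mk4 a11 a12 a13 a14 a21 a22 a23 a24 a31 a32 a33 a34 a41 a42 a43 a44 $ 4 $ 3 = a43"
  "mk4 a11 a12 a13 a14 a21 a22 a23 a24 a31 a32 a33 a34 a41 a42 a43 a44 $ 4 $ 4 = a44"
  by (simp_all add: mk4_def)

lemma mm4: "((A::complex^4^4) ** B) $ i $ j = A$i$1*B$1$j + A$i$2*B$2$j + A$i$3*B$3$j + A$i$4*B$4$j"
  by (simp add: matrix_matrix_mult_def sum_4)

lemma eq4: "(A::complex^4^4) = B \<longleftrightarrow> A$1$1 = B$1$1 \<and> A$1$2 = B$1$2 \<and> A$1$3 = B$1$3 \<and> A$1$4 = B$1$4 \<and> A$2$1 = B$2$1 \<and> A$2$2 = B$2$2 \<and> A$2$3 = B$2$3 \<and> A$2$4 = B$2$4 \<and> A$3$1 = B$3$1 \<and> A$3$2 = B$3$2 \<and> A$3$3 = B$3$3 \<and> A$3$4 = B$3$4 \<and> A$4$1 = B$4$1 \<and> A$4$2 = B$4$2 \<and> A$4$3 = B$4$3 \<and> A$4$4 = B$4$4"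
  by (simp add: vec_eq_iff forall_4)

lemma J4_nth[simp]:
  "J4$1$1 = 0" "J4$1$2 = 0" "J4$1$3 = 1" "J4$1$4 = 0"
  "J4$2$1 = 0" "J4$2$2 = 0" "J4$2$3 = 0" "J4$2$4 = 1"
  "J4$3$1 = -1" "J4$3$2 = 0" "J4$3$3 = 0" "J4$3$4 = 0"
  "J4$4$1 = 0" "J4$4$2 = -1" "J4$4$3 = 0" "J4$4$4 = 0"
  by (simp_all add: J4_def)

lemma transpose_nth[simp]: "transpose A $ i $ j = A $ j $ i"
  by (simp add: transpose_def)

lemma sympl_entry: "(transpose (A::complex^4^4) ** J4 ** A) $ i $ j = A$1$i * A$3$j + A$2$i * A$4$j - A$3$i * A$1$j - A$4$i * A$2$j"
  by (simp add: mm4 algebra_simps)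

lemma Sp2_I: "(A::complex^4^4) ** cadj A = mat 1 \<Longrightarrow> transpose A ** J4 ** A = J4 \<Longrightarrow> A \<in> Sp2_set"
  by (simp add: Sp2_set_def)

lemma Sp2_rinv: "A \<in> Sp2_set \<Longrightarrow> A ** cadj A = mat 1" by (simp add: Sp2_set_def)

lemma rows_Sp2: "A \<in> Sp2_set \<Longrightarrow> (A ** cadj A) $ i $ j = (if i = j then 1 else 0)"
  by (simp add: Sp2_rinv mat1_nth)
lemma cols_Sp2: "A \<in> Sp2_set \<Longrightarrow> (cadj A ** A) $ i $ j = (if i = j then 1 else 0)"
  by (simp add: Sp2_linv mat1_nth)
lemma sympl_Sp2: "A \<in> Sp2_set \<Longrightarrow> (transpose A ** J4 ** A) $ i $ j = J4 $ i $ j"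
  by (simp add: Sp2_set_def)

abbreviation dg4 :: "complex \<Rightarrow> complex \<Rightarrow> complex \<Rightarrow> complex \<Rightarrow> complex^4^4" where
  "dg4 a b c d \<equiv> mk4 a 0 0 0 0 b 0 0 0 0 c 0 0 0 0 d"

lemma dg4_Sp2: "a * cnj a = 1 \<Longrightarrow> b * cnj b = 1 \<Longrightarrow> c * cnj c = 1 \<Longrightarrow> d * cnj d = 1 \<Longrightarrow>
  a * c = 1 \<Longrightarrow> b * d = 1 \<Longrightarrow> dg4 a b c d \<in> Sp2_set"
  by (rule Sp2_I) (simp_all add: eq4 mm4 mat1_nth mult.commute)

lemma L_iff: "A \<in> Sp2_long \<longleftrightarrow> A \<in> Sp2_set \<and> A$1$1 = 1 \<and> A$1$2 = 0 \<and> A$1$3 = 0 \<and> A$1$4 = 0 \<and>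
   A$2$1 = 0 \<and> A$2$3 = 0 \<and> A$3$1 = 0 \<and> A$3$2 = 0 \<and> A$3$3 = 1 \<and> A$3$4 = 0 \<and> A$4$1 = 0 \<and> A$4$3 = 0"
  unfolding Sp2_long_def by (auto simp: forall_4)

lemma L_mult: "A \<in> Sp2_long \<Longrightarrow> B \<in> Sp2_long \<Longrightarrow> A ** B \<in> Sp2_long"
  by (simp add: L_iff Sp2_mult mm4)
lemma L_cadj: "A \<in> Sp2_long \<Longrightarrow> cadj A \<in> Sp2_long"
  by (simp add: L_iff Sp2_cadj)
definition mk2 :: "complex \<Rightarrow> complex \<Rightarrow> complex \<Rightarrow> complex \<Rightarrow> complex^2^2" where
  "mk2 a b c d = (\<chi> i j. if i = 1 then (if j = 1 then a else b) else (if j = 1 then c else d))"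

lemma mk2_nth[simp]: "mk2 a b c d $ 1 $ 1 = a" "mk2 a b c d $ 1 $ 2 = b" "mk2 a b c d $ 2 $ 1 = c" "mk2 a b c d $ 2 $ 2 = d"
  by (simp_all add: mk2_def)

lemma mm2: "((A::complex^2^2) ** B) $ i $ j = A$i$1*B$1$j + A$i$2*B$2$j"
  by (simp add: matrix_matrix_mult_def sum_2)

lemma eq2: "(A::complex^2^2) = B \<longleftrightarrow> A$1$1 = B$1$1 \<and> A$1$2 = B$1$2 \<and> A$2$1 = B$2$1 \<and> A$2$2 = B$2$2"
  by (simp add: vec_eq_iff forall_2)

definition emb :: "complex^2^2 \<Rightarrow> complex^4^4" where
  "emb U = mk4 (U$1$1) (U$1$2) 0 0 (U$2$1) (U$2$2) 0 0 0 0 (cnj (U$1$1)) (cnj (U$1$2)) 0 0 (cnj (U$2$1)) (cnj (U$2$2))"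

lemma Sp2_short_eq: "Sp2_short = emb ` SU_set"
  unfolding Sp2_short_def
proof (rule image_cong[OF refl])
  fix U :: "complex^2^2"
  show "(\<chi> i j::4. let f = (\<lambda>k::4. if k = 1 \<or> k = 3 then (1::2) else 2) in
      if (i = 1 \<or> i = 2) \<and> (j = 1 \<or> j = 2) then U $ f i $ f j
      else if (i = 3 \<or> i = 4) \<and> (j = 3 \<or> j = 4) then cnj (U $ f i $ f j)
      else 0) = emb U"
    by (simp add: eq4 emb_def Let_def)
qed

lemma emb_nth[simp]:
  "emb U $ 1 $ 1 = U$1$1" "emb U $ 1 $ 2 = U$1$2" "emb U $ 1 $ 3 = 0" "emb U $ 1 $ 4 = 0"
  "emb U $ 2 $ 1 = U$2$1" "emb U $ 2 $ 2 = U$2$2" "emb U $ 2 $ 3 = 0" "emb U $ 2 $ 4 = 0"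
  "emb U $ 3 $ 1 = 0" "emb U $ 3 $ 2 = 0" "emb U $ 3 $ 3 = cnj (U$1$1)" "emb U $ 3 $ 4 = cnj (U$1$2)"
  "emb U $ 4 $ 1 = 0" "emb U $ 4 $ 2 = 0" "emb U $ 4 $ 3 = cnj (U$2$1)" "emb U $ 4 $ 4 = cnj (U$2$2)"
  by (simp_all add: emb_def)

lemma emb_mult: "emb (U ** V) = emb U ** emb V"
  by (simp add: eq4 mm4 mm2)

lemma emb_cadj: "cadj (emb U) = emb (cadj U)"
  by (simp add: eq4)

lemma emb_inj: "emb U = emb V \<Longrightarrow> U = V"
  by (simp add: eq4 eq2)

lemma SU2_facts:
  fixes U :: "complex^2^2"
  assumes U: "U \<in> SU_set"
  shows "U$1$1 * cnj (U$1$1) + U$1$2 * cnj (U$1$2) = 1" "U$2$1 * cnj (U$2$1) + U$2$2 * cnj (U$2$2) = 1"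
    "U$1$1 * cnj (U$2$1) + U$1$2 * cnj (U$2$2) = 0"
    "cnj (U$1$1) * U$1$1 + cnj (U$2$1) * U$2$1 = 1" "cnj (U$1$2) * U$1$2 + cnj (U$2$2) * U$2$2 = 1"
    "cnj (U$1$1) * U$1$2 + cnj (U$2$1) * U$2$2 = 0"
    "U$1$1 * U$2$2 - U$1$2 * U$2$1 = 1"
proof -
  have r: "\<And>i j. (U ** cadj U) $ i $ j = (if i = j then 1 else 0)" using rows_SU[OF U] .
  have c: "\<And>i j. (cadj U ** U) $ i $ j = (if i = j then 1 else 0)" using cols_SU[OF U] .
  show "U$1$1 * cnj (U$1$1) + U$1$2 * cnj (U$1$2) = 1" using r[of 1 1] by (simp add: mm2)
  show "U$2$1 * cnj (U$2$1) + U$2$2 * cnj (U$2$2) = 1" using r[of 2 2] by (simp add: mm2)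
  show "U$1$1 * cnj (U$2$1) + U$1$2 * cnj (U$2$2) = 0" using r[of 1 2] by (simp add: mm2)
  show "cnj (U$1$1) * U$1$1 + cnj (U$2$1) * U$2$1 = 1" using c[of 1 1] by (simp add: mm2)
  show "cnj (U$1$2) * U$1$2 + cnj (U$2$2) * U$2$2 = 1" using c[of 2 2] by (simp add: mm2)
  show "cnj (U$1$1) * U$1$2 + cnj (U$2$1) * U$2$2 = 0" using c[of 1 2] by (simp add: mm2)
  show "U$1$1 * U$2$2 - U$1$2 * U$2$1 = 1" using U by (simp add: SU_set_def det_2)
qed

lemma emb_Sp2: assumes U: "U \<in> SU_set" shows "emb U \<in> Sp2_set"
proof (rule Sp2_I)
  have "emb U ** cadj (emb U) = emb (U ** cadj U)" by (simp add: emb_cadj emb_mult)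
  also have "\<dots> = mat 1" using U by (simp add: SU_rinv eq4 mat1_nth)
  finally show "emb U ** cadj (emb U) = mat 1" .
  note f = SU2_facts[OF U]
  have g1: "cnj (U$1$1) * U$1$1 = 1 - cnj (U$2$1) * U$2$1" using f(4) by (simp add: eq_diff_eq)
  have g4: "cnj (U$1$2) * U$1$2 = 1 - cnj (U$2$2) * U$2$2" using f(5) by (simp add: eq_diff_eq)
  have g2: "cnj (U$1$1) * U$1$2 = - (cnj (U$2$1) * U$2$2)" using f(6) by (simp add: eq_neg_iff_add_eq_0)
  have "cnj (cnj (U$1$1) * U$1$2 + cnj (U$2$1) * U$2$2) = 0" using f(6) by simp
  then have "cnj (U$1$2) * U$1$1 + cnj (U$2$2) * U$2$1 = 0" by (simp add: mult.commute)
  then have g3: "cnj (U$1$2) * U$1$1 = - (cnj (U$2$2) * U$2$1)" by (simp add: eq_neg_iff_add_eq_0)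
  have f1: "U$1$1 * cnj (U$1$1) + U$2$1 * cnj (U$2$1) = 1" using f(4) by (simp add: mult.commute)
  have f2: "U$1$2 * cnj (U$1$2) + U$2$2 * cnj (U$2$2) = 1" using f(5) by (simp add: mult.commute)
  have f3: "U$1$1 * cnj (U$1$2) + U$2$1 * cnj (U$2$2) = 0"
    using arg_cong[OF f(6), of cnj] by (simp add: mult.commute)
  have f4: "U$1$2 * cnj (U$1$1) + U$2$2 * cnj (U$2$1) = 0" using f(6) by (simp add: mult.commute)
  show "transpose (emb U) ** J4 ** emb U = J4"
    unfolding eq4 sympl_entry by (simp add: g1 g2 g3 g4 f1 f2 f3 f4)
qed

lemma S_iff: "A \<in> Sp2_short \<longleftrightarrow> (\<exists>U\<in>SU_set. A = emb U)"
  by (auto simp: Sp2_short_eq)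

lemma S_mult: "A \<in> Sp2_short \<Longrightarrow> B \<in> Sp2_short \<Longrightarrow> A ** B \<in> Sp2_short"
  by (auto simp: S_iff emb_mult[symmetric] SU_mult)
lemma S_cadj: "A \<in> Sp2_short \<Longrightarrow> cadj A \<in> Sp2_short"
  by (auto simp: S_iff emb_cadj SU_cadj)
lemma S_Sp2: "A \<in> Sp2_short \<Longrightarrow> A \<in> Sp2_set"
  by (auto simp: S_iff emb_Sp2)

definition isd4 :: "complex^4^4 \<Rightarrow> bool" where
  "isd4 y \<longleftrightarrow> y \<in> Sp2_set \<and> y$1$2 = 0 \<and> y$1$3 = 0 \<and> y$1$4 = 0 \<and> y$2$1 = 0 \<and> y$2$3 = 0 \<and> y$2$4 = 0 \<and>
     y$3$1 = 0 \<and> y$3$2 = 0 \<and> y$3$4 = 0 \<and> y$4$1 = 0 \<and> y$4$2 = 0 \<and> y$4$3 = 0"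

lemma isd4_cadj: "isd4 y \<Longrightarrow> isd4 (cadj y)"
  by (simp add: isd4_def Sp2_cadj)

lemma isd4_facts:
  assumes y: "isd4 y"
  shows "y$1$1 * cnj (y$1$1) = 1" "y$2$2 * cnj (y$2$2) = 1" "y$3$3 * cnj (y$3$3) = 1" "y$4$4 * cnj (y$4$4) = 1"
    "y$3$3 = cnj (y$1$1)" "y$4$4 = cnj (y$2$2)"
proof -
  have S: "y \<in> Sp2_set" using y by (simp add: isd4_def)
  note r = rows_Sp2[OF S] and sy = sympl_Sp2[OF S]
  show a: "y$1$1 * cnj (y$1$1) = 1" using r[of 1 1] y by (simp add: mm4 isd4_def)
  show b: "y$2$2 * cnj (y$2$2) = 1" using r[of 2 2] y by (simp add: mm4 isd4_def)
  show "y$3$3 * cnj (y$3$3) = 1" using r[of 3 3] y by (simp add: mm4 isd4_def)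
  show "y$4$4 * cnj (y$4$4) = 1" using r[of 4 4] y by (simp add: mm4 isd4_def)
  have c: "y$1$1 * y$3$3 = 1" using sy[of 1 3] y by (simp add: sympl_entry isd4_def)
  have d: "y$2$2 * y$4$4 = 1" using sy[of 2 4] y by (simp add: sympl_entry isd4_def)
  have "y$3$3 = y$3$3 * (y$1$1 * cnj (y$1$1))" using a by simp
  also have "\<dots> = (y$1$1 * y$3$3) * cnj (y$1$1)" by (simp add: algebra_simps)
  finally show "y$3$3 = cnj (y$1$1)" using c by simp
  have "y$4$4 = y$4$4 * (y$2$2 * cnj (y$2$2))" using b by simp
  also have "\<dots> = (y$2$2 * y$4$4) * cnj (y$2$2)" by (simp add: algebra_simps)
  finally show "y$4$4 = cnj (y$2$2)" using d by simp
qed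

lemma isd4_S: assumes y: "isd4 y" and x: "x \<in> Sp2_short" shows "y ** x ** cadj y \<in> Sp2_short"
proof -
  obtain U where U: "U \<in> SU_set" "x = emb U" using x by (auto simp: S_iff)
  note f = isd4_facts[OF y]
  define D where "D = mk2 (y$1$1) 0 0 (y$2$2)"
  have DD: "D ** cadj D = mat 1" "cadj D ** D = mat 1" unfolding D_def using f
    by (simp_all add: eq2 mm2 mat1_nth mult.commute)
  have "D ** U ** cadj D ** cadj (D ** U ** cadj D) = D ** U ** (cadj D ** D) ** cadj U ** cadj D"
    by (simp add: cadj_mult matrix_mul_assoc)
  also have "\<dots> = mat 1" using DD U by (simp add: SU_rinv matrix_mul_assoc[symmetric])
  finally have u: "D ** U ** cadj D ** cadj (D ** U ** cadj D) = mat 1" .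
  have "det (D ** U ** cadj D) = det D * det U * det (cadj D)" by (simp add: det_mul)
  also have "\<dots> = 1"
  proof -
    have "y$1$1 * y$2$2 * (cnj (y$1$1) * cnj (y$2$2)) = (y$1$1 * cnj (y$1$1)) * (y$2$2 * cnj (y$2$2))"
      by (simp add: algebra_simps)
    then show ?thesis unfolding D_def using U f by (simp add: SU_set_def det_2)
  qed
  finally have "D ** U ** cadj D \<in> SU_set" using u by (simp add: SU_set_def)
  moreover have "y ** x ** cadj y = emb (D ** U ** cadj D)"
    unfolding U(2) D_def using y f by (simp add: eq4 mm4 mm2 isd4_def)
  ultimately show ?thesis by (auto simp: S_iff)
qed

lemma isd4_L: assumes y: "isd4 y" and x: "x \<in> Sp2_long" shows "y ** x ** cadj y \<in> Sp2_long"
proof -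
  note f = isd4_facts[OF y]
  show ?thesis using y x f by (simp add: L_iff mm4 isd4_def Sp2_mult Sp2_cadj)
qed
definition "tL = dg4 1 \<i> 1 (-\<i>)"
definition "zS = emb (mk2 \<i> 0 0 (-\<i>))"
definition "nS = emb (mk2 0 1 (-1) 0)"
definition "nL = mk4 1 0 0 0 0 0 0 1 0 0 1 0 0 (-1) 0 0"

lemma SU2_mk2I: "mk2 a b c d ** cadj (mk2 a b c d) = mat 1 \<Longrightarrow> det (mk2 a b c d) = 1 \<Longrightarrow> mk2 a b c d \<in> SU_set"
  by (simp add: SU_set_def)

lemma dg2_SU: "a * cnj a = 1 \<Longrightarrow> b * cnj b = 1 \<Longrightarrow> a * b = 1 \<Longrightarrow> mk2 a 0 0 b \<in> SU_set"
  by (rule SU2_mk2I) (simp_all add: eq2 mm2 mat1_nth det_2)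

lemma tL_L: "tL \<in> Sp2_long"
  unfolding tL_def by (simp add: L_iff dg4_Sp2)
lemma zS_S: "zS \<in> Sp2_short"
  unfolding zS_def S_iff by (rule bexI[where x = "mk2 \<i> 0 0 (-\<i>)"]) (simp_all add: dg2_SU)
lemma nS_S: "nS \<in> Sp2_short"
  unfolding nS_def S_iff by (rule bexI[where x = "mk2 0 1 (-1) 0"]) (simp_all add: SU2_mk2I eq2 mm2 mat1_nth det_2)
lemma nL_L: "nL \<in> Sp2_long"
  unfolding nL_def by (simp add: L_iff Sp2_I eq4 mm4 mat1_nth sympl_entry)

lemma S_zero: "A \<in> Sp2_short \<Longrightarrow> A$1$3 = 0 \<and> A$1$4 = 0 \<and> A$2$3 = 0 \<and> A$2$4 = 0 \<and> A$3$1 = 0 \<and> A$3$2 = 0 \<and> A$4$1 = 0 \<and> A$4$2 = 0"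
  by (auto simp: S_iff)

lemma SpA_PA: "y \<in> Sp2_long \<Longrightarrow> zS ** y ** cadj zS = tL ** y ** cadj tL"
  unfolding zS_def tL_def by (simp add: eq4 mm4 L_iff algebra_simps)

lemma SpA_comm_t: "y \<in> Sp2_long \<Longrightarrow> (y ** tL = tL ** y \<longleftrightarrow> y$2$4 = 0 \<and> y$4$2 = 0)"
  unfolding tL_def by (auto simp: eq4 mm4 L_iff)

lemma norm_lemma:
  fixes y :: "complex^'n::finite^'n" and S :: "(complex^'n^'n) set"
  assumes grp: "group (matgrp C)" and inv: "\<And>A. A \<in> C \<Longrightarrow> inv\<^bsub>matgrp C\<^esub> A = cadj A"
    and linv: "\<And>A. A \<in> C \<Longrightarrow> cadj A ** A = mat 1" and rinv: "\<And>A. A \<in> C \<Longrightarrow> A ** cadj A = mat 1"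
    and sub: "S \<subseteq> C" and yC: "y \<in> C"
  shows "y \<in> normalizer (matgrp C) S \<longleftrightarrow> (\<lambda>x. y ** x ** cadj y) ` S = S"
  using normalizer_iff[of S "matgrp C" y] sub yC inv by simp

lemma norm_imp:
  fixes y :: "complex^'n::finite^'n"
  assumes im: "(\<lambda>x. y ** x ** cadj y) ` S = S" and linv: "cadj y ** y = mat 1" and w: "w \<in> S"
  shows "y ** w ** cadj y \<in> S" "cadj y ** w ** y \<in> S"
proof -
  show "y ** w ** cadj y \<in> S" using im w by blast
  obtain x where x: "x \<in> S" "w = y ** x ** cadj y" using im w by force
  have "cadj y ** w ** y = (cadj y ** y) ** x ** (cadj y ** y)"
    by (subst x(2)) (simp add: matrix_mul_assoc)
  then show "cadj y ** w ** y \<in> S" using x linv by simp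
qed

lemma norm_diag:
  fixes y :: "complex^'n::finite^'n"
  assumes P: "\<And>x. x \<in> S \<Longrightarrow> y ** x ** cadj y \<in> S" and P': "\<And>x. x \<in> S \<Longrightarrow> cadj y ** x ** y \<in> S"
    and rinv: "y ** cadj y = mat 1"
  shows "(\<lambda>x. y ** x ** cadj y) ` S = S"
proof (intro equalityI subsetI)
  fix w assume "w \<in> (\<lambda>x. y ** x ** cadj y) ` S"
  then show "w \<in> S" using P by auto
next
  fix w assume w: "w \<in> S"
  have "y ** (cadj y ** w ** y) ** cadj y = (y ** cadj y) ** w ** (y ** cadj y)"
    by (simp add: matrix_mul_assoc)
  then have "w = y ** (cadj y ** w ** y) ** cadj y" using rinv by simp
  then show "w \<in> (\<lambda>x. y ** x ** cadj y) ` S" using P'[OF w] by blast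
qed

lemma SpA_norm_iff:
  assumes y: "y \<in> Sp2_long"
  shows "y \<in> normalizer Sp2 Sp2_short \<longleftrightarrow> y$2$4 = 0 \<and> y$4$2 = 0"
proof -
  have yS: "y \<in> Sp2_set" using y by (simp add: L_iff)
  have N: "y \<in> normalizer Sp2 Sp2_short \<longleftrightarrow> (\<lambda>x. y ** x ** cadj y) ` Sp2_short = Sp2_short"
    by (rule norm_lemma[OF group_Sp2 inv_Sp2 Sp2_linv Sp2_rinv _ yS]) (auto simp: S_Sp2)
  show ?thesis
  proof
    assume "y \<in> normalizer Sp2 Sp2_short"
    then have im: "(\<lambda>x. y ** x ** cadj y) ` Sp2_short = Sp2_short" using N by simp
    have "y ** nS ** cadj y \<in> Sp2_short" using norm_imp(1)[OF im Sp2_linv[OF yS] nS_S] .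
    then have a: "y$4$2 = 0" using y S_zero[of "y ** nS ** cadj y"] unfolding nS_def by (simp add: L_iff mm4)
    have "cadj y ** nS ** y \<in> Sp2_short" using norm_imp(2)[OF im Sp2_linv[OF yS] nS_S] .
    then have b: "y$2$4 = 0" using y S_zero[of "cadj y ** nS ** y"] unfolding nS_def by (simp add: L_iff mm4)
    show "y$2$4 = 0 \<and> y$4$2 = 0" using a b by simp
  next
    assume "y$2$4 = 0 \<and> y$4$2 = 0"
    then have d: "isd4 y" using y by (simp add: isd4_def L_iff)
    have "(\<lambda>x. y ** x ** cadj y) ` Sp2_short = Sp2_short"
      using norm_diag[of Sp2_short y] isd4_S[OF d] isd4_S[OF isd4_cadj[OF d]] Sp2_rinv[OF yS] by simp
    then show "y \<in> normalizer Sp2 Sp2_short" using N by simp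
  qed
qed

lemma SpA_PC: "a \<in> Sp2_long \<Longrightarrow> a$2$4 = 0 \<Longrightarrow> a$4$2 = 0 \<Longrightarrow> b \<in> Sp2_long \<Longrightarrow> b$2$4 = 0 \<Longrightarrow> b$4$2 = 0 \<Longrightarrow> a ** b = b ** a"
  by (simp add: eq4 mm4 L_iff mult.commute)
lemma SpA_rigid: "rigid Sp2 Sp2_short Sp2_long tL (T::'h itself)"
  unfolding rigid_def
proof (intro allI impI)
  fix H :: "'h monoid" and \<pi> h s
  assume H: "group H" and hom: "\<pi> \<in> hom Sp2 H"
    and kX: "\<forall>x\<in>Sp2_short. \<pi> x = one H \<longrightarrow> (\<forall>x'\<in>Sp2_short. x \<otimes>\<^bsub>Sp2\<^esub> x' = x' \<otimes>\<^bsub>Sp2\<^esub> x)"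
    and kY: "\<forall>y\<in>Sp2_long. \<pi> y = one H \<longrightarrow> (\<forall>y'\<in>Sp2_long. y \<otimes>\<^bsub>Sp2\<^esub> y' = y' \<otimes>\<^bsub>Sp2\<^esub> y)"
    and h: "h \<in> carrier H" and s: "s \<in> Sp2_long"
    and hX: "\<forall>x\<in>Sp2_short. mult H h (\<pi> x) = mult H (\<pi> x) h"
    and hY: "\<forall>y\<in>Sp2_long. mult H (mult H h (\<pi> y)) (m_inv H h) = \<pi> (s \<otimes>\<^bsub>Sp2\<^esub> y \<otimes>\<^bsub>Sp2\<^esub> inv\<^bsub>Sp2\<^esub> s)"
  have gh: "group_hom Sp2 H \<pi>" using group_Sp2 H hom by (simp add: group_hom_def group_hom_axioms_def)
  have pm: "\<And>A B. A \<in> Sp2_set \<Longrightarrow> B \<in> Sp2_set \<Longrightarrow> \<pi> (A ** B) = \<pi> A \<otimes>\<^bsub>H\<^esub> \<pi> B"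
    using group_hom.hom_mult[OF gh] by simp
  have pi: "\<And>A. A \<in> Sp2_set \<Longrightarrow> \<pi> (cadj A) = inv\<^bsub>H\<^esub> \<pi> A"
    using group_hom.hom_inv[OF gh] by (simp add: inv_Sp2)
  have pc: "\<And>A. A \<in> Sp2_set \<Longrightarrow> \<pi> A \<in> carrier H"
    using group_hom.hom_closed[OF gh] by simp
  have G1S: "\<And>A. A \<in> Sp2_short \<Longrightarrow> A \<in> Sp2_set" by (simp add: S_Sp2)
  have G2S: "\<And>A. A \<in> Sp2_long \<Longrightarrow> A \<in> Sp2_set" by (simp add: L_iff)
  have sS: "s \<in> Sp2_set" using s G2S by simp
  have hY': "\<And>y. y \<in> Sp2_long \<Longrightarrow> h \<otimes>\<^bsub>H\<^esub> \<pi> y \<otimes>\<^bsub>H\<^esub> inv\<^bsub>H\<^esub> h = \<pi> (s ** y ** cadj s)"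
    using hY sS by (simp add: inv_Sp2)
  have kX': "x ** x' = x' ** x" if "x \<in> Sp2_short" "\<pi> x = \<one>\<^bsub>H\<^esub>" "x' \<in> Sp2_short" for x x'
  proof -
    have "x \<otimes>\<^bsub>Sp2\<^esub> x' = x' \<otimes>\<^bsub>Sp2\<^esub> x" using kX that by blast
    then show ?thesis by simp
  qed
  have kY': "y ** y' = y' ** y" if "y \<in> Sp2_long" "\<pi> y = \<one>\<^bsub>H\<^esub>" "y' \<in> Sp2_long" for y y'
  proof -
    have "y \<otimes>\<^bsub>Sp2\<^esub> y' = y' \<otimes>\<^bsub>Sp2\<^esub> y" using kY that by blast
    then show ?thesis by simp
  qed
  have hX': "\<And>x. x \<in> Sp2_short \<Longrightarrow> h \<otimes>\<^bsub>H\<^esub> \<pi> x = \<pi> x \<otimes>\<^bsub>H\<^esub> h" using hX by simp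
  have rows: "\<And>i j. (s ** cadj s) $ i $ j = (if i = j then 1 else 0)" using rows_Sp2[OF sS] .
  have s0: "s$1$1 = 1" "s$1$2 = 0" "s$1$3 = 0" "s$1$4 = 0" "s$2$1 = 0" "s$2$3 = 0" "s$3$1 = 0" "s$3$2 = 0"
    "s$3$3 = 1" "s$3$4 = 0" "s$4$1 = 0" "s$4$3 = 0" using s by (simp_all add: L_iff)
  have r23: "s$2$2 * cnj (s$4$2) + s$2$4 * cnj (s$4$4) = 0" using rows[of 2 4] s0 by (simp add: mm4)
  have r22: "s$2$2 * cnj (s$2$2) + s$2$4 * cnj (s$2$4) = 1" using rows[of 2 2] s0 by (simp add: mm4)
  have r33: "s$4$2 * cnj (s$4$2) + s$4$4 * cnj (s$4$4) = 1" using rows[of 4 4] s0 by (simp add: mm4)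
  define \<mu> where "\<mu> = cis (pi/4)"
  have mu: "\<mu> * cnj \<mu> = 1" "\<mu> * \<mu> = \<i>" "cnj \<mu> * cnj \<mu> = - \<i>" "cnj \<mu> * \<mu> = 1"
    using mu_facts unfolding \<mu>_def by auto
  define x0 where "x0 = emb (mk2 \<mu> 0 0 (cnj \<mu>))"
  have x0G1: "x0 \<in> Sp2_short" unfolding x0_def S_iff
    by (rule bexI[where x = "mk2 \<mu> 0 0 (cnj \<mu>)"]) (simp_all add: dg2_SU mu)
  define y' where "y' = s ** tL ** cadj s"
  have y'G2: "y' \<in> Sp2_long" unfolding y'_def using s tL_L by (simp add: L_mult L_cadj)
  have py': "\<pi> y' = h \<otimes>\<^bsub>H\<^esub> \<pi> tL \<otimes>\<^bsub>H\<^esub> inv\<^bsub>H\<^esub> h" using hY'[OF tL_L] y'_def by simp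
  have xt: "x0 ** tL = tL ** x0" unfolding x0_def tL_def by (simp add: eq4 mm4)
  have x3S: "x0 \<in> Sp2_set" using x0G1 G1S by simp
  have t3S: "tL \<in> Sp2_set" using tL_L G2S by simp
  have y'S: "y' \<in> Sp2_set" using y'G2 G2S by simp
  have "\<pi> x0 \<otimes>\<^bsub>H\<^esub> \<pi> tL = \<pi> tL \<otimes>\<^bsub>H\<^esub> \<pi> x0" using xt pm x3S t3S by metis
  then have "\<pi> x0 \<otimes>\<^bsub>H\<^esub> \<pi> y' = \<pi> y' \<otimes>\<^bsub>H\<^esub> \<pi> x0"
    unfolding py' using group.conj_comm_lemma[OF H h pc[OF x3S] pc[OF t3S] hX'[OF x0G1]] by simp
  then have "\<pi> x0 \<otimes>\<^bsub>H\<^esub> \<pi> y' \<otimes>\<^bsub>H\<^esub> inv\<^bsub>H\<^esub> \<pi> x0 \<otimes>\<^bsub>H\<^esub> inv\<^bsub>H\<^esub> \<pi> y' = \<one>\<^bsub>H\<^esub>"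
    using group.comm_commutator[OF H pc[OF x3S] pc[OF y'S]] by simp
  moreover define e where "e = x0 ** y' ** cadj x0 ** cadj y'"
  ultimately have pe: "\<pi> e = \<one>\<^bsub>H\<^esub>" by (simp add: e_def pm pi x3S y'S Sp2_mult Sp2_cadj)
  have isdx: "isd4 x0" unfolding isd4_def using x3S by (simp add: x0_def)
  have eG2: "e \<in> Sp2_long" unfolding e_def using isd4_L[OF isdx y'G2] L_cadj[OF y'G2] L_mult by blast
  have et: "e ** tL = tL ** e" using kY'[OF eG2 pe tL_L] .
  have er: "e ** nL = nL ** e" using kY'[OF eG2 pe nL_L] .
  have e23: "e$2$4 = 0" and e32: "e$4$2 = 0" using et SpA_comm_t[OF eG2] by auto
  have e0: "e$1$1 = 1" "e$1$2 = 0" "e$1$3 = 0" "e$1$4 = 0" "e$2$1 = 0" "e$2$3 = 0" "e$3$1 = 0" "e$3$2 = 0"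
    "e$3$3 = 1" "e$3$4 = 0" "e$4$1 = 0" "e$4$3 = 0" using eG2 by (simp_all add: L_iff)
  have e2233: "e$2$2 = e$4$4" using arg_cong[OF er, of "\<lambda>A. A$2$4"] e0 e23 e32 unfolding nL_def by (simp add: mm4)
  have "(transpose e ** J4 ** e) $ 2 $ 4 = J4 $ 2 $ 4" using eG2 by (simp add: L_iff sympl_Sp2)
  then have esq: "e$2$2 * e$2$2 = 1" using e0 e23 e32 e2233 by (simp add: sympl_entry)
  have "e ** y' = x0 ** y' ** cadj x0 ** (cadj y' ** y')" by (simp add: e_def matrix_mul_assoc)
  then have ey: "e ** y' = x0 ** y' ** cadj x0" using y'S by (simp add: Sp2_linv)
  have "(e ** y') $ 2 $ 4 = e$2$2 * y'$2$4" using e0 e23 by (simp add: mm4)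
  moreover have "(x0 ** y' ** cadj x0) $ 2 $ 4 = - \<i> * y'$2$4"
  proof -
    have "(x0 ** y' ** cadj x0) $ 2 $ 4 = (cnj \<mu> * cnj \<mu>) * y'$2$4" unfolding x0_def by (simp add: mm4 ac_simps)
    then show ?thesis using mu(3) by simp
  qed
  ultimately have q: "e$2$2 * y'$2$4 = - \<i> * y'$2$4" using ey by simp
  have "(e$2$2 + \<i>) * y'$2$4 = 0" unfolding distrib_right q by simp
  moreover have "e$2$2 + \<i> \<noteq> 0"
  proof
    assume "e$2$2 + \<i> = 0"
    then have "e$2$2 = - \<i>" by (simp only: eq_neg_iff_add_eq_0)
    then show False using esq by simp
  qed
  ultimately have y23: "y'$2$4 = 0" by simp
  have "y'$2$4 = s$2$2 * \<i> * cnj (s$4$2) + s$2$4 * (- \<i>) * cnj (s$4$4)"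
    unfolding y'_def tL_def using s0 by (simp add: mm4)
  then have "\<i> * (s$2$2 * cnj (s$4$2) - s$2$4 * cnj (s$4$4)) = 0" using y23
    by (simp add: right_diff_distrib mult.commute mult.left_commute)
  then have PQ: "s$2$2 * cnj (s$4$2) = s$2$4 * cnj (s$4$4)" by simp
  then have "s$2$2 * cnj (s$4$2) + s$2$2 * cnj (s$4$2) = 0" using r23 by simp
  then have A: "s$2$2 * cnj (s$4$2) = 0" by simp
  then have B: "s$2$4 * cnj (s$4$4) = 0" using PQ by simp
  show "s \<otimes>\<^bsub>Sp2\<^esub> tL = tL \<otimes>\<^bsub>Sp2\<^esub> s"
  proof (cases "s$4$2 = 0")
    case True
    then have "s$4$4 * cnj (s$4$4) = 1" using r33 by simp
    then have "s$4$4 \<noteq> 0" by auto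
    then have "s$2$4 = 0" using B by simp
    then show ?thesis using True SpA_comm_t[OF s] by simp
  next
    case False
    then have s22: "s$2$2 = 0" using A by simp
    then have "s$2$4 * cnj (s$2$4) = 1" using r22 by simp
    then have "s$2$4 \<noteq> 0" by auto
    then have s33: "s$4$4 = 0" using B by simp
    have n23: "s$2$4 * cnj (s$2$4) = 1" using r22 s22 by simp
    have n32: "s$4$2 * cnj (s$4$2) = 1" using r33 s33 by simp
    define d where "d = dg4 1 \<mu> 1 (cnj \<mu>)"
    define d' where "d' = dg4 1 (cnj \<mu>) 1 \<mu>"
    define xm where "xm = emb (mk2 \<mu> 0 0 (cnj \<mu>))"
    define xm' where "xm' = emb (mk2 (cnj \<mu>) 0 0 \<mu>)"
    have dG2: "d \<in> Sp2_long" unfolding d_def using mu by (simp add: L_iff dg4_Sp2)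
    have d'G2: "d' \<in> Sp2_long" unfolding d'_def using mu by (simp add: L_iff dg4_Sp2 mult.commute)
    have xmG1: "xm \<in> Sp2_short" unfolding xm_def S_iff
      by (rule bexI[where x = "mk2 \<mu> 0 0 (cnj \<mu>)"]) (simp_all add: dg2_SU mu)
    have xm'G1: "xm' \<in> Sp2_short" unfolding xm'_def S_iff
      by (rule bexI[where x = "mk2 (cnj \<mu>) 0 0 \<mu>"]) (simp_all add: dg2_SU mu mult.commute)
    have sd: "s ** d ** cadj s = d'"
    proof -
      have "s$2$4 * cnj \<mu> * cnj (s$2$4) = cnj \<mu>" using n23 by (simp add: algebra_simps)
      moreover have "s$4$2 * \<mu> * cnj (s$4$2) = \<mu>" using n32 by (simp add: algebra_simps)
      ultimately show ?thesis unfolding d_def d'_def using s0 s22 s33 by (simp add: eq4 mm4)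
    qed
    have nd: "nS ** d ** cadj nS = xm ** d" unfolding nS_def d_def xm_def using mu by (simp add: eq4 mm4)
    have nd': "nS ** d' ** cadj nS = xm' ** d'" unfolding nS_def d'_def xm'_def using mu by (simp add: eq4 mm4)
    have xx: "xm ** cadj xm' = zS" unfolding xm_def xm'_def zS_def using mu by (simp add: eq4 mm4)
    have dS: "d \<in> Sp2_set" "d' \<in> Sp2_set" using dG2 d'G2 G2S by auto
    have xS: "xm \<in> Sp2_set" "xm' \<in> Sp2_set" using xmG1 xm'G1 G1S by auto
    have nS: "nS \<in> Sp2_set" using nS_S G1S by auto
    have pd': "\<pi> d' = h \<otimes>\<^bsub>H\<^esub> \<pi> d \<otimes>\<^bsub>H\<^esub> inv\<^bsub>H\<^esub> h" using hY'[OF dG2] sd by simp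
    have "\<pi> nS \<otimes>\<^bsub>H\<^esub> \<pi> d' \<otimes>\<^bsub>H\<^esub> inv\<^bsub>H\<^esub> \<pi> nS = \<pi> xm' \<otimes>\<^bsub>H\<^esub> \<pi> d'"
      using arg_cong[OF nd', of \<pi>] by (simp add: pm pi nS dS xS Sp2_mult Sp2_cadj)
    moreover have "\<pi> nS \<otimes>\<^bsub>H\<^esub> \<pi> d' \<otimes>\<^bsub>H\<^esub> inv\<^bsub>H\<^esub> \<pi> nS = \<pi> xm \<otimes>\<^bsub>H\<^esub> \<pi> d'"
    proof -
      have "\<pi> nS \<otimes>\<^bsub>H\<^esub> \<pi> d' \<otimes>\<^bsub>H\<^esub> inv\<^bsub>H\<^esub> \<pi> nS
          = h \<otimes>\<^bsub>H\<^esub> (\<pi> nS \<otimes>\<^bsub>H\<^esub> \<pi> d \<otimes>\<^bsub>H\<^esub> inv\<^bsub>H\<^esub> \<pi> nS) \<otimes>\<^bsub>H\<^esub> inv\<^bsub>H\<^esub> h"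
        unfolding pd' using group.conj_conj_lemma[OF H h pc[OF nS] pc[OF dS(1)] hX'[OF nS_S]] .
      also have "\<pi> nS \<otimes>\<^bsub>H\<^esub> \<pi> d \<otimes>\<^bsub>H\<^esub> inv\<^bsub>H\<^esub> \<pi> nS = \<pi> xm \<otimes>\<^bsub>H\<^esub> \<pi> d"
        using arg_cong[OF nd, of \<pi>] by (simp add: pm pi nS dS xS Sp2_mult Sp2_cadj)
      also have "h \<otimes>\<^bsub>H\<^esub> (\<pi> xm \<otimes>\<^bsub>H\<^esub> \<pi> d) \<otimes>\<^bsub>H\<^esub> inv\<^bsub>H\<^esub> h = \<pi> xm \<otimes>\<^bsub>H\<^esub> \<pi> d'"
        unfolding pd' using group.conj_prod_lemma[OF H h pc[OF xS(1)] pc[OF dS(1)] hX'[OF xmG1]] .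
      finally show ?thesis .
    qed
    ultimately have "\<pi> xm' \<otimes>\<^bsub>H\<^esub> \<pi> d' = \<pi> xm \<otimes>\<^bsub>H\<^esub> \<pi> d'" by simp
    then have "\<pi> xm' = \<pi> xm" using group.right_cancel[OF H] pc xS dS by blast
    then have "\<pi> (xm ** cadj xm') = \<one>\<^bsub>H\<^esub>" by (simp add: pm pi xS Sp2_cadj pc group.r_inv[OF H])
    then have "\<pi> zS = \<one>\<^bsub>H\<^esub>" using xx by simp
    then have "zS ** nS = nS ** zS" using kX'[OF zS_S _ nS_S] by simp
    then have False unfolding zS_def nS_def by (simp add: eq4 mm4 complex_eq_iff)
    then show ?thesis ..
  qed
qed

lemma good_SpA: "good Sp2 Sp2_short Sp2_long (T::'h itself)"
  unfolding good_def
proof (intro exI conjI)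
  show "zS \<in> Sp2_short" by (rule zS_S)
  show "tL \<in> Sp2_long" by (rule tL_L)
  show "\<forall>y\<in>Sp2_long. zS \<otimes>\<^bsub>Sp2\<^esub> y \<otimes>\<^bsub>Sp2\<^esub> inv\<^bsub>Sp2\<^esub> zS = tL \<otimes>\<^bsub>Sp2\<^esub> y \<otimes>\<^bsub>Sp2\<^esub> inv\<^bsub>Sp2\<^esub> tL"
    using zS_S tL_L by (simp add: S_Sp2 L_iff inv_Sp2 SpA_PA)
  show "Sp2_long \<inter> normalizer Sp2 Sp2_short = {y \<in> Sp2_long. y \<otimes>\<^bsub>Sp2\<^esub> tL = tL \<otimes>\<^bsub>Sp2\<^esub> y}"
    using SpA_norm_iff SpA_comm_t by auto
  show "\<forall>a\<in>Sp2_long \<inter> normalizer Sp2 Sp2_short. \<forall>b\<in>Sp2_long \<inter> normalizer Sp2 Sp2_short. a \<otimes>\<^bsub>Sp2\<^esub> b = b \<otimes>\<^bsub>Sp2\<^esub> a"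
    using SpA_norm_iff SpA_PC by auto
  show "rigid Sp2 Sp2_short Sp2_long tL T" by (rule SpA_rigid)
qed
definition "zL = dg4 1 (-1) 1 (-1)"

lemma zL_L: "zL \<in> Sp2_long"
  unfolding zL_def by (simp add: L_iff dg4_Sp2)

lemma S_facts: "A \<in> Sp2_short \<Longrightarrow> A$1$3 = 0 \<and> A$1$4 = 0 \<and> A$2$3 = 0 \<and> A$2$4 = 0 \<and> A$3$1 = 0 \<and> A$3$2 = 0 \<and> A$4$1 = 0 \<and> A$4$2 = 0
   \<and> A$3$3 = cnj (A$1$1) \<and> A$3$4 = cnj (A$1$2) \<and> A$4$3 = cnj (A$2$1) \<and> A$4$4 = cnj (A$2$2)
   \<and> A$1$1 * A$2$2 - A$1$2 * A$2$1 = 1"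
  by (auto simp: S_iff SU2_facts(7))

lemma ii3[simp]: "\<i> * a * \<i> = - a"
proof -
  have "\<i> * a * \<i> = \<i> * \<i> * a" by (simp add: ac_simps)
  then show ?thesis by simp
qed

lemma negself: "- x = (x::complex) \<Longrightarrow> x = 0"
  by (simp add: complex_eq_iff)

lemma SpB_PA: "y \<in> Sp2_short \<Longrightarrow> zL ** y ** cadj zL = zS ** y ** cadj zS"
  unfolding zS_def zL_def by (auto simp: S_iff eq4 mm4)

lemma SpB_comm_t:
  assumes y: "y \<in> Sp2_short" shows "y ** zS = zS ** y \<longleftrightarrow> y$1$2 = 0 \<and> y$2$1 = 0"
proof
  note f = S_facts[OF y]
  assume c: "y ** zS = zS ** y"
  have "(y ** zS) $ 1 $ 2 = (zS ** y) $ 1 $ 2" using c by simp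
  then have "- (\<i> * y$1$2) = \<i> * y$1$2" using f unfolding zS_def by (simp add: mm4 mult.commute)
  then have a: "y$1$2 = 0" using negself by fastforce
  have "(y ** zS) $ 2 $ 1 = (zS ** y) $ 2 $ 1" using c by simp
  then have "\<i> * y$2$1 = - (\<i> * y$2$1)" using f unfolding zS_def by (simp add: mm4 mult.commute)
  then have b: "y$2$1 = 0" using negself by fastforce
  show "y$1$2 = 0 \<and> y$2$1 = 0" using a b by simp
next
  note f = S_facts[OF y]
  assume "y$1$2 = 0 \<and> y$2$1 = 0"
  then show "y ** zS = zS ** y" using f unfolding zS_def by (simp add: eq4 mm4 mult.commute)
qed

lemma SpB_norm_iff:
  assumes y: "y \<in> Sp2_short"
  shows "y \<in> normalizer Sp2 Sp2_long \<longleftrightarrow> y$1$2 = 0 \<and> y$2$1 = 0"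
proof -
  have yS: "y \<in> Sp2_set" using y by (simp add: S_Sp2)
  have N: "y \<in> normalizer Sp2 Sp2_long \<longleftrightarrow> (\<lambda>x. y ** x ** cadj y) ` Sp2_long = Sp2_long"
    by (rule norm_lemma[OF group_Sp2 inv_Sp2 Sp2_linv Sp2_rinv _ yS]) (auto simp: L_iff)
  note yf = S_facts[OF y]
  show ?thesis
  proof
    assume "y \<in> normalizer Sp2 Sp2_long"
    then have im: "(\<lambda>x. y ** x ** cadj y) ` Sp2_long = Sp2_long" using N by simp
    have m: "y ** nL ** cadj y \<in> Sp2_long" using norm_imp(1)[OF im Sp2_linv[OF yS] nL_L] .
    have a: "y$1$1 * cnj (y$1$1) = 1" using m yf unfolding nL_def by (simp add: L_iff mm4)
    have "(y ** cadj y) $ 1 $ 1 = 1" using rows_Sp2[OF yS, of 1 1] by simp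
    then have "y$1$1 * cnj (y$1$1) + y$1$2 * cnj (y$1$2) = 1" using yf by (simp add: mm4)
    then have "y$1$2 * cnj (y$1$2) = 0" using a by simp
    then have b: "y$1$2 = 0" by simp
    have "y$1$1 * cnj (y$2$1) = 0" using m yf b unfolding nL_def by (simp add: L_iff mm4)
    moreover have "y$1$1 \<noteq> 0" using a by auto
    ultimately have c: "y$2$1 = 0" by simp
    show "y$1$2 = 0 \<and> y$2$1 = 0" using b c by simp
  next
    assume "y$1$2 = 0 \<and> y$2$1 = 0"
    then have d: "isd4 y" using yS yf by (simp add: isd4_def)
    have "(\<lambda>x. y ** x ** cadj y) ` Sp2_long = Sp2_long"
      using norm_diag[of Sp2_long y] isd4_L[OF d] isd4_L[OF isd4_cadj[OF d]] Sp2_rinv[OF yS] by simp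
    then show "y \<in> normalizer Sp2 Sp2_long" using N by simp
  qed
qed

lemma SpB_PC: "a \<in> Sp2_short \<Longrightarrow> a$1$2 = 0 \<Longrightarrow> a$2$1 = 0 \<Longrightarrow> b \<in> Sp2_short \<Longrightarrow> b$1$2 = 0 \<Longrightarrow> b$2$1 = 0 \<Longrightarrow> a ** b = b ** a"
  using S_facts[of a] S_facts[of b] by (simp add: eq4 mm4 mult.commute)

lemma lam_facts: "cis (pi/8) * cnj (cis (pi/8)) = 1" "cnj (cis (pi/8)) * cis (pi/8) = 1"
  "cis (pi/8) * cis (pi/8) = cis (pi/4)"
  by (simp_all add: cis_cnj cis_mult)
lemma SpB_rigid: "rigid Sp2 Sp2_long Sp2_short zS (T::'h itself)"
  unfolding rigid_def
proof (intro allI impI)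
  fix H :: "'h monoid" and \<pi> h s
  assume H: "group H" and hom: "\<pi> \<in> hom Sp2 H"
    and kX: "\<forall>x\<in>Sp2_long. \<pi> x = one H \<longrightarrow> (\<forall>x'\<in>Sp2_long. x \<otimes>\<^bsub>Sp2\<^esub> x' = x' \<otimes>\<^bsub>Sp2\<^esub> x)"
    and kY: "\<forall>y\<in>Sp2_short. \<pi> y = one H \<longrightarrow> (\<forall>y'\<in>Sp2_short. y \<otimes>\<^bsub>Sp2\<^esub> y' = y' \<otimes>\<^bsub>Sp2\<^esub> y)"
    and h: "h \<in> carrier H" and s: "s \<in> Sp2_short"
    and hX: "\<forall>x\<in>Sp2_long. mult H h (\<pi> x) = mult H (\<pi> x) h"
    and hY: "\<forall>y\<in>Sp2_short. mult H (mult H h (\<pi> y)) (m_inv H h) = \<pi> (s \<otimes>\<^bsub>Sp2\<^esub> y \<otimes>\<^bsub>Sp2\<^esub> inv\<^bsub>Sp2\<^esub> s)"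
  have gh: "group_hom Sp2 H \<pi>" using group_Sp2 H hom by (simp add: group_hom_def group_hom_axioms_def)
  have pm: "\<And>A B. A \<in> Sp2_set \<Longrightarrow> B \<in> Sp2_set \<Longrightarrow> \<pi> (A ** B) = \<pi> A \<otimes>\<^bsub>H\<^esub> \<pi> B"
    using group_hom.hom_mult[OF gh] by simp
  have pi: "\<And>A. A \<in> Sp2_set \<Longrightarrow> \<pi> (cadj A) = inv\<^bsub>H\<^esub> \<pi> A"
    using group_hom.hom_inv[OF gh] by (simp add: inv_Sp2)
  have pc: "\<And>A. A \<in> Sp2_set \<Longrightarrow> \<pi> A \<in> carrier H"
    using group_hom.hom_closed[OF gh] by simp
  have G1S: "\<And>A. A \<in> Sp2_long \<Longrightarrow> A \<in> Sp2_set" by (simp add: L_iff)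
  have G2S: "\<And>A. A \<in> Sp2_short \<Longrightarrow> A \<in> Sp2_set" by (simp add: S_Sp2)
  have sS: "s \<in> Sp2_set" using s G2S by simp
  have hY': "\<And>y. y \<in> Sp2_short \<Longrightarrow> h \<otimes>\<^bsub>H\<^esub> \<pi> y \<otimes>\<^bsub>H\<^esub> inv\<^bsub>H\<^esub> h = \<pi> (s ** y ** cadj s)"
    using hY sS by (simp add: inv_Sp2)
  have kX': "x ** x' = x' ** x" if "x \<in> Sp2_long" "\<pi> x = \<one>\<^bsub>H\<^esub>" "x' \<in> Sp2_long" for x x'
  proof -
    have "x \<otimes>\<^bsub>Sp2\<^esub> x' = x' \<otimes>\<^bsub>Sp2\<^esub> x" using kX that by blast
    then show ?thesis by simp
  qed
  have kY': "y ** y' = y' ** y" if "y \<in> Sp2_short" "\<pi> y = \<one>\<^bsub>H\<^esub>" "y' \<in> Sp2_short" for y y'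
  proof -
    have "y \<otimes>\<^bsub>Sp2\<^esub> y' = y' \<otimes>\<^bsub>Sp2\<^esub> y" using kY that by blast
    then show ?thesis by simp
  qed
  have hX': "\<And>x. x \<in> Sp2_long \<Longrightarrow> h \<otimes>\<^bsub>H\<^esub> \<pi> x = \<pi> x \<otimes>\<^bsub>H\<^esub> h" using hX by simp
  have rows: "\<And>i j. (s ** cadj s) $ i $ j = (if i = j then 1 else 0)" using rows_Sp2[OF sS] .
  note sf = S_facts[OF s]
  have s0: "s$1$3 = 0" "s$1$4 = 0" "s$2$3 = 0" "s$2$4 = 0" "s$3$1 = 0" "s$3$2 = 0" "s$4$1 = 0" "s$4$2 = 0"
    "s$3$3 = cnj (s$1$1)" "s$3$4 = cnj (s$1$2)" "s$4$3 = cnj (s$2$1)" "s$4$4 = cnj (s$2$2)"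
    using sf by simp_all
  have r23: "s$1$1 * cnj (s$2$1) + s$1$2 * cnj (s$2$2) = 0" using rows[of 1 2] s0 by (simp add: mm4)
  have r22: "s$1$1 * cnj (s$1$1) + s$1$2 * cnj (s$1$2) = 1" using rows[of 1 1] s0 by (simp add: mm4)
  have r33: "s$2$1 * cnj (s$2$1) + s$2$2 * cnj (s$2$2) = 1" using rows[of 2 2] s0 by (simp add: mm4)
  define x0 where "x0 = tL"
  have x0G1: "x0 \<in> Sp2_long" unfolding x0_def by (rule tL_L)
  define y' where "y' = s ** zS ** cadj s"
  have y'G2: "y' \<in> Sp2_short" unfolding y'_def using s zS_S by (simp add: S_mult S_cadj)
  have py': "\<pi> y' = h \<otimes>\<^bsub>H\<^esub> \<pi> zS \<otimes>\<^bsub>H\<^esub> inv\<^bsub>H\<^esub> h" using hY'[OF zS_S] y'_def by simp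
  have xt: "x0 ** zS = zS ** x0" unfolding x0_def tL_def zS_def by (simp add: eq4 mm4)
  have x3S: "x0 \<in> Sp2_set" using x0G1 G1S by simp
  have t3S: "zS \<in> Sp2_set" using zS_S G2S by simp
  have y'S: "y' \<in> Sp2_set" using y'G2 G2S by simp
  have "\<pi> x0 \<otimes>\<^bsub>H\<^esub> \<pi> zS = \<pi> zS \<otimes>\<^bsub>H\<^esub> \<pi> x0" using xt pm x3S t3S by metis
  then have "\<pi> x0 \<otimes>\<^bsub>H\<^esub> \<pi> y' = \<pi> y' \<otimes>\<^bsub>H\<^esub> \<pi> x0"
    unfolding py' using group.conj_comm_lemma[OF H h pc[OF x3S] pc[OF t3S] hX'[OF x0G1]] by simp
  then have "\<pi> x0 \<otimes>\<^bsub>H\<^esub> \<pi> y' \<otimes>\<^bsub>H\<^esub> inv\<^bsub>H\<^esub> \<pi> x0 \<otimes>\<^bsub>H\<^esub> inv\<^bsub>H\<^esub> \<pi> y' = \<one>\<^bsub>H\<^esub>"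
    using group.comm_commutator[OF H pc[OF x3S] pc[OF y'S]] by simp
  moreover define e where "e = x0 ** y' ** cadj x0 ** cadj y'"
  ultimately have pe: "\<pi> e = \<one>\<^bsub>H\<^esub>" by (simp add: e_def pm pi x3S y'S Sp2_mult Sp2_cadj)
  have isdx: "isd4 x0" unfolding isd4_def using x3S by (simp add: x0_def tL_def)
  have eG2: "e \<in> Sp2_short" unfolding e_def using isd4_S[OF isdx y'G2] S_cadj[OF y'G2] S_mult by blast
  have et: "e ** zS = zS ** e" using kY'[OF eG2 pe zS_S] .
  have er: "e ** nS = nS ** e" using kY'[OF eG2 pe nS_S] .
  have e23: "e$1$2 = 0" and e32: "e$2$1 = 0" using et SpB_comm_t[OF eG2] by auto
  note ef = S_facts[OF eG2]
  have e2233: "e$1$1 = e$2$2" using arg_cong[OF er, of "\<lambda>A. A$1$2"] ef e23 e32 unfolding nS_def by (simp add: mm4)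
  have esq: "e$1$1 * e$1$1 = 1" using ef e23 e32 e2233 by simp
  have "e ** y' = x0 ** y' ** cadj x0 ** (cadj y' ** y')" by (simp add: e_def matrix_mul_assoc)
  then have ey: "e ** y' = x0 ** y' ** cadj x0" using y'S by (simp add: Sp2_linv)
  have "(e ** y') $ 1 $ 2 = e$1$1 * y'$1$2" using ef e23 by (simp add: mm4)
  moreover have "(x0 ** y' ** cadj x0) $ 1 $ 2 = - \<i> * y'$1$2" unfolding x0_def tL_def by (simp add: mm4)
  ultimately have q: "e$1$1 * y'$1$2 = - \<i> * y'$1$2" using ey by simp
  have "(e$1$1 + \<i>) * y'$1$2 = 0" unfolding distrib_right q by simp
  moreover have "e$1$1 + \<i> \<noteq> 0"
  proof
    assume "e$1$1 + \<i> = 0"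
    then have "e$1$1 = - \<i>" by (simp only: eq_neg_iff_add_eq_0)
    then show False using esq by simp
  qed
  ultimately have y23: "y'$1$2 = 0" by simp
  have "y'$1$2 = s$1$1 * \<i> * cnj (s$2$1) + s$1$2 * (- \<i>) * cnj (s$2$2)"
    unfolding y'_def zS_def using s0 by (simp add: mm4)
  then have "\<i> * (s$1$1 * cnj (s$2$1) - s$1$2 * cnj (s$2$2)) = 0" using y23
    by (simp add: right_diff_distrib mult.commute mult.left_commute)
  then have PQ: "s$1$1 * cnj (s$2$1) = s$1$2 * cnj (s$2$2)" by simp
  then have "s$1$1 * cnj (s$2$1) + s$1$1 * cnj (s$2$1) = 0" using r23 by simp
  then have A: "s$1$1 * cnj (s$2$1) = 0" by simp
  then have B: "s$1$2 * cnj (s$2$2) = 0" using PQ by simp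
  show "s \<otimes>\<^bsub>Sp2\<^esub> zS = zS \<otimes>\<^bsub>Sp2\<^esub> s"
  proof (cases "s$2$1 = 0")
    case True
    then have "s$2$2 * cnj (s$2$2) = 1" using r33 by simp
    then have "s$2$2 \<noteq> 0" by auto
    then have "s$1$2 = 0" using B by simp
    then show ?thesis using True SpB_comm_t[OF s] by simp
  next
    case False
    then have s22: "s$1$1 = 0" using A by simp
    then have "s$1$2 * cnj (s$1$2) = 1" using r22 by simp
    then have "s$1$2 \<noteq> 0" by auto
    then have s33: "s$2$2 = 0" using B by simp
    have n23: "s$1$2 * cnj (s$1$2) = 1" using r22 s22 by simp
    have n32: "s$2$1 * cnj (s$2$1) = 1" using r33 s33 by simp
    define lm0 where "lm0 = cis (pi/8)"
    define \<mu> where "\<mu> = cis (pi/4)"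
    have mu: "\<mu> * cnj \<mu> = 1" "\<mu> * \<mu> = \<i>" "cnj \<mu> * cnj \<mu> = - \<i>" "cnj \<mu> * \<mu> = 1"
      using mu_facts unfolding \<mu>_def by auto
    have lam: "lm0 * cnj lm0 = 1" "cnj lm0 * lm0 = 1" "lm0 * lm0 = \<mu>"
      using lam_facts unfolding lm0_def \<mu>_def by auto
    have lmf: "\<mu> * cnj lm0 = lm0" "cnj \<mu> * lm0 = cnj lm0"
    proof -
      have "\<mu> * cnj lm0 = lm0 * (lm0 * cnj lm0)" using lam(3) by (simp add: ac_simps)
      then show "\<mu> * cnj lm0 = lm0" using lam(1) by simp
      have "cnj \<mu> = cnj lm0 * cnj lm0" using lam(3) by (metis complex_cnj_mult)
      then have "cnj \<mu> * lm0 = cnj lm0 * (cnj lm0 * lm0)" by (simp add: ac_simps)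
      then show "cnj \<mu> * lm0 = cnj lm0" using lam(2) by simp
    qed
    define d where "d = emb (mk2 lm0 0 0 (cnj lm0))"
    define d' where "d' = emb (mk2 (cnj lm0) 0 0 lm0)"
    define xm where "xm = dg4 1 \<mu> 1 (cnj \<mu>)"
    define xm' where "xm' = dg4 1 (cnj \<mu>) 1 \<mu>"
    have dG2: "d \<in> Sp2_short" unfolding d_def S_iff
      by (rule bexI[where x = "mk2 lm0 0 0 (cnj lm0)"]) (simp_all add: dg2_SU lam)
    have d'G2: "d' \<in> Sp2_short" unfolding d'_def S_iff
      by (rule bexI[where x = "mk2 (cnj lm0) 0 0 lm0"]) (simp_all add: dg2_SU lam)
    have xmG1: "xm \<in> Sp2_long" unfolding xm_def using mu by (simp add: L_iff dg4_Sp2)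
    have xm'G1: "xm' \<in> Sp2_long" unfolding xm'_def using mu by (simp add: L_iff dg4_Sp2 mult.commute)
    have sd: "s ** d ** cadj s = d'"
    proof -
      have "s$1$2 * cnj lm0 * cnj (s$1$2) = cnj lm0" using n23 by (simp add: algebra_simps)
      moreover have "s$2$1 * lm0 * cnj (s$2$1) = lm0" using n32 by (simp add: algebra_simps)
      moreover have "cnj (s$1$2) * lm0 * s$1$2 = lm0" using n23 by (simp add: algebra_simps)
      moreover have "cnj (s$2$1) * cnj lm0 * s$2$1 = cnj lm0" using n32 by (simp add: algebra_simps)
      ultimately show ?thesis unfolding d_def d'_def using s0 s22 s33 by (simp add: eq4 mm4)
    qed
    have nd: "nL ** d ** cadj nL = xm ** d" unfolding nL_def d_def xm_def using lmf by (simp add: eq4 mm4)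
    have nd': "nL ** d' ** cadj nL = xm' ** d'" unfolding nL_def d'_def xm'_def using lmf by (simp add: eq4 mm4)
    have xx: "xm ** cadj xm' = tL" unfolding xm_def xm'_def tL_def using mu by (simp add: eq4 mm4)
    have dS: "d \<in> Sp2_set" "d' \<in> Sp2_set" using dG2 d'G2 G2S by auto
    have xS: "xm \<in> Sp2_set" "xm' \<in> Sp2_set" using xmG1 xm'G1 G1S by auto
    have nS: "nL \<in> Sp2_set" using nL_L G1S by auto
    have pd': "\<pi> d' = h \<otimes>\<^bsub>H\<^esub> \<pi> d \<otimes>\<^bsub>H\<^esub> inv\<^bsub>H\<^esub> h" using hY'[OF dG2] sd by simp
    have "\<pi> nL \<otimes>\<^bsub>H\<^esub> \<pi> d' \<otimes>\<^bsub>H\<^esub> inv\<^bsub>H\<^esub> \<pi> nL = \<pi> xm' \<otimes>\<^bsub>H\<^esub> \<pi> d'"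
      using arg_cong[OF nd', of \<pi>] by (simp add: pm pi nS dS xS Sp2_mult Sp2_cadj)
    moreover have "\<pi> nL \<otimes>\<^bsub>H\<^esub> \<pi> d' \<otimes>\<^bsub>H\<^esub> inv\<^bsub>H\<^esub> \<pi> nL = \<pi> xm \<otimes>\<^bsub>H\<^esub> \<pi> d'"
    proof -
      have "\<pi> nL \<otimes>\<^bsub>H\<^esub> \<pi> d' \<otimes>\<^bsub>H\<^esub> inv\<^bsub>H\<^esub> \<pi> nL
          = h \<otimes>\<^bsub>H\<^esub> (\<pi> nL \<otimes>\<^bsub>H\<^esub> \<pi> d \<otimes>\<^bsub>H\<^esub> inv\<^bsub>H\<^esub> \<pi> nL) \<otimes>\<^bsub>H\<^esub> inv\<^bsub>H\<^esub> h"
        unfolding pd' using group.conj_conj_lemma[OF H h pc[OF nS] pc[OF dS(1)] hX'[OF nL_L]] .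
      also have "\<pi> nL \<otimes>\<^bsub>H\<^esub> \<pi> d \<otimes>\<^bsub>H\<^esub> inv\<^bsub>H\<^esub> \<pi> nL = \<pi> xm \<otimes>\<^bsub>H\<^esub> \<pi> d"
        using arg_cong[OF nd, of \<pi>] by (simp add: pm pi nS dS xS Sp2_mult Sp2_cadj)
      also have "h \<otimes>\<^bsub>H\<^esub> (\<pi> xm \<otimes>\<^bsub>H\<^esub> \<pi> d) \<otimes>\<^bsub>H\<^esub> inv\<^bsub>H\<^esub> h = \<pi> xm \<otimes>\<^bsub>H\<^esub> \<pi> d'"
        unfolding pd' using group.conj_prod_lemma[OF H h pc[OF xS(1)] pc[OF dS(1)] hX'[OF xmG1]] .
      finally show ?thesis .
    qed
    ultimately have "\<pi> xm' \<otimes>\<^bsub>H\<^esub> \<pi> d' = \<pi> xm \<otimes>\<^bsub>H\<^esub> \<pi> d'" by simp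
    then have "\<pi> xm' = \<pi> xm" using group.right_cancel[OF H] pc xS dS by blast
    then have "\<pi> (xm ** cadj xm') = \<one>\<^bsub>H\<^esub>" by (simp add: pm pi xS Sp2_cadj pc group.r_inv[OF H])
    then have "\<pi> tL = \<one>\<^bsub>H\<^esub>" using xx by simp
    then have "tL ** nL = nL ** tL" using kX'[OF tL_L _ nL_L] by simp
    then have False unfolding tL_def nL_def by (simp add: eq4 mm4 complex_eq_iff)
    then show ?thesis ..
  qed
qed

lemma good_SpB: "good Sp2 Sp2_long Sp2_short (T::'h itself)"
  unfolding good_def
proof (intro exI conjI)
  show "zL \<in> Sp2_long" by (rule zL_L)
  show "zS \<in> Sp2_short" by (rule zS_S)
  show "\<forall>y\<in>Sp2_short. zL \<otimes>\<^bsub>Sp2\<^esub> y \<otimes>\<^bsub>Sp2\<^esub> inv\<^bsub>Sp2\<^esub> zL = zS \<otimes>\<^bsub>Sp2\<^esub> y \<otimes>\<^bsub>Sp2\<^esub> inv\<^bsub>Sp2\<^esub> zS"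
    using zS_S zL_L by (simp add: S_Sp2 L_iff inv_Sp2 SpB_PA)
  show "Sp2_short \<inter> normalizer Sp2 Sp2_long = {y \<in> Sp2_short. y \<otimes>\<^bsub>Sp2\<^esub> zS = zS \<otimes>\<^bsub>Sp2\<^esub> y}"
    using SpB_norm_iff SpB_comm_t by auto
  show "\<forall>a\<in>Sp2_short \<inter> normalizer Sp2 Sp2_long. \<forall>b\<in>Sp2_short \<inter> normalizer Sp2 Sp2_long. a \<otimes>\<^bsub>Sp2\<^esub> b = b \<otimes>\<^bsub>Sp2\<^esub> a"
    using SpB_norm_iff SpB_PC by auto
  show "rigid Sp2 Sp2_long Sp2_short zS T" by (rule SpB_rigid)
qed
lemma inv_agree:
  assumes A: "group A" and B: "group B" and SA: "subgroup S A" and SB: "subgroup S B"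
    and c: "\<forall>x\<in>S. \<forall>y\<in>S. x \<otimes>\<^bsub>A\<^esub> y = x \<otimes>\<^bsub>B\<^esub> y" and x: "x \<in> S"
  shows "inv\<^bsub>A\<^esub> x = inv\<^bsub>B\<^esub> x"
proof -
  have oA: "\<one>\<^bsub>A\<^esub> \<in> S" using SA by (simp add: subgroup.one_closed)
  have oAc: "\<one>\<^bsub>A\<^esub> \<in> carrier B" using oA SB subgroup.subset by blast
  have "\<one>\<^bsub>A\<^esub> \<otimes>\<^bsub>B\<^esub> \<one>\<^bsub>A\<^esub> = \<one>\<^bsub>A\<^esub>" using c oA A by (metis group.is_monoid monoid.l_one oA SA subgroup.subset subsetD)
  then have o: "\<one>\<^bsub>A\<^esub> = \<one>\<^bsub>B\<^esub>"
    using B oAc by (metis group.is_monoid group.l_cancel_one' monoid.one_closed)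
  have iA: "inv\<^bsub>A\<^esub> x \<in> S" using SA x by (simp add: subgroup.m_inv_closed)
  have xA: "x \<in> carrier A" using SA x subgroup.subset by blast
  have "inv\<^bsub>A\<^esub> x \<otimes>\<^bsub>B\<^esub> x = \<one>\<^bsub>B\<^esub>" using c iA x o A xA by (metis group.l_inv)
  then show ?thesis using B SB iA x by (metis group.inv_equality subgroup.subset subsetD)
qed

lemma main_argument:
  fixes M12 M13 M23 :: "'a monoid" and M1 M2 M3 :: "'a set"
    and H :: "'h monoid" and \<pi> :: "'a \<Rightarrow> 'h"
  assumes grp: "group M12" "group M13" "group M23"
    and M1: "M1 = carrier M12 \<inter> carrier M13"
    and M2: "M2 = carrier M12 \<inter> carrier M23"
    and M3: "M3 = carrier M13 \<inter> carrier M23"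
    and sub: "subgroup M1 M12" "subgroup M1 M13" "subgroup M2 M12" "subgroup M2 M23"
             "subgroup M3 M13" "subgroup M3 M23"
    and comp1: "\<forall>x\<in>M1. \<forall>y\<in>M1. x \<otimes>\<^bsub>M12\<^esub> y = x \<otimes>\<^bsub>M13\<^esub> y"
    and comp2: "\<forall>x\<in>M2. \<forall>y\<in>M2. x \<otimes>\<^bsub>M12\<^esub> y = x \<otimes>\<^bsub>M23\<^esub> y"
    and comp3: "\<forall>x\<in>M3. \<forall>y\<in>M3. x \<otimes>\<^bsub>M13\<^esub> y = x \<otimes>\<^bsub>M23\<^esub> y"
    and g12: "good M12 M1 M2 TYPE('h)" and g23: "good M23 M3 M2 TYPE('h)"
    and c13: "\<forall>x\<in>M1. \<forall>w\<in>M3. x \<otimes>\<^bsub>M13\<^esub> w = w \<otimes>\<^bsub>M13\<^esub> x"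
    and H: "group H"
    and hom: "\<pi> \<in> hom M12 H" "\<pi> \<in> hom M13 H" "\<pi> \<in> hom M23 H"
    and ker1: "\<forall>x\<in>M1. \<pi> x = \<one>\<^bsub>H\<^esub> \<longrightarrow> (\<forall>y\<in>M1. x \<otimes>\<^bsub>M12\<^esub> y = y \<otimes>\<^bsub>M12\<^esub> x)"
    and ker2: "\<forall>x\<in>M2. \<pi> x = \<one>\<^bsub>H\<^esub> \<longrightarrow> (\<forall>y\<in>M2. x \<otimes>\<^bsub>M12\<^esub> y = y \<otimes>\<^bsub>M12\<^esub> x)"
    and ker3: "\<forall>x\<in>M3. \<pi> x = \<one>\<^bsub>H\<^esub> \<longrightarrow> (\<forall>y\<in>M3. x \<otimes>\<^bsub>M13\<^esub> y = y \<otimes>\<^bsub>M13\<^esub> x)"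
  shows "M2 \<inter> normalizer M12 M1 = M2 \<inter> normalizer M23 M3"
proof -
  obtain z1 t1 where z1: "z1 \<in> M1" and t1: "t1 \<in> M2"
    and A1: "\<forall>y\<in>M2. z1 \<otimes>\<^bsub>M12\<^esub> y \<otimes>\<^bsub>M12\<^esub> inv\<^bsub>M12\<^esub> z1 = t1 \<otimes>\<^bsub>M12\<^esub> y \<otimes>\<^bsub>M12\<^esub> inv\<^bsub>M12\<^esub> t1"
    and B1: "M2 \<inter> normalizer M12 M1 = {y\<in>M2. y \<otimes>\<^bsub>M12\<^esub> t1 = t1 \<otimes>\<^bsub>M12\<^esub> y}"
    and C1: "\<forall>a\<in>M2 \<inter> normalizer M12 M1. \<forall>b\<in>M2 \<inter> normalizer M12 M1. a \<otimes>\<^bsub>M12\<^esub> b = b \<otimes>\<^bsub>M12\<^esub> a"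
    and R1: "rigid M12 M1 M2 t1 TYPE('h)"
    using g12 unfolding good_def by blast
  obtain z3 t3 where z3: "z3 \<in> M3" and t3: "t3 \<in> M2"
    and A3: "\<forall>y\<in>M2. z3 \<otimes>\<^bsub>M23\<^esub> y \<otimes>\<^bsub>M23\<^esub> inv\<^bsub>M23\<^esub> z3 = t3 \<otimes>\<^bsub>M23\<^esub> y \<otimes>\<^bsub>M23\<^esub> inv\<^bsub>M23\<^esub> t3"
    and B3: "M2 \<inter> normalizer M23 M3 = {y\<in>M2. y \<otimes>\<^bsub>M23\<^esub> t3 = t3 \<otimes>\<^bsub>M23\<^esub> y}"
    and C3: "\<forall>a\<in>M2 \<inter> normalizer M23 M3. \<forall>b\<in>M2 \<inter> normalizer M23 M3. a \<otimes>\<^bsub>M23\<^esub> b = b \<otimes>\<^bsub>M23\<^esub> a"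
    and R3: "rigid M23 M3 M2 t3 TYPE('h)"
    using g23 unfolding good_def by blast
  have gh12: "group_hom M12 H \<pi>" using grp(1) H hom(1) by (simp add: group_hom_def group_hom_axioms_def)
  have gh13: "group_hom M13 H \<pi>" using grp(2) H hom(2) by (simp add: group_hom_def group_hom_axioms_def)
  have gh23: "group_hom M23 H \<pi>" using grp(3) H hom(3) by (simp add: group_hom_def group_hom_axioms_def)
  have invq: "\<And>x. x \<in> M2 \<Longrightarrow> inv\<^bsub>M12\<^esub> x = inv\<^bsub>M23\<^esub> x"
    using inv_agree[OF grp(1) grp(3) sub(3) sub(4) comp2] by blast
  have M2i12: "\<And>x. x \<in> M2 \<Longrightarrow> inv\<^bsub>M12\<^esub> x \<in> M2" using sub(3) by (simp add: subgroup.m_inv_closed)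
  have M2m12: "\<And>x y. x \<in> M2 \<Longrightarrow> y \<in> M2 \<Longrightarrow> x \<otimes>\<^bsub>M12\<^esub> y \<in> M2" using sub(3) by (simp add: subgroup.m_closed)
  have conjeq: "\<And>t y. t \<in> M2 \<Longrightarrow> y \<in> M2 \<Longrightarrow>
      t \<otimes>\<^bsub>M12\<^esub> y \<otimes>\<^bsub>M12\<^esub> inv\<^bsub>M12\<^esub> t = t \<otimes>\<^bsub>M23\<^esub> y \<otimes>\<^bsub>M23\<^esub> inv\<^bsub>M23\<^esub> t"
    using comp2 invq M2i12 M2m12 by metis
  have c12: "\<And>x. x \<in> M2 \<Longrightarrow> x \<in> carrier M12" and c23: "\<And>x. x \<in> M2 \<Longrightarrow> x \<in> carrier M23"
    using M2 by auto
  have z3c13: "z3 \<in> carrier M13" and z3c23: "z3 \<in> carrier M23" using z3 M3 by auto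
  have z1c13: "z1 \<in> carrier M13" and z1c12: "z1 \<in> carrier M12" using z1 M1 by auto
  have h3: "\<pi> z3 \<in> carrier H" using gh23 z3c23 by (simp add: group_hom.hom_closed)
  have h1: "\<pi> z1 \<in> carrier H" using gh12 z1c12 by (simp add: group_hom.hom_closed)
  have t3D1: "t3 \<otimes>\<^bsub>M12\<^esub> t1 = t1 \<otimes>\<^bsub>M12\<^esub> t3"
  proof -
    have a: "\<forall>x\<in>M1. \<pi> z3 \<otimes>\<^bsub>H\<^esub> \<pi> x = \<pi> x \<otimes>\<^bsub>H\<^esub> \<pi> z3"
    proof
      fix x assume x: "x \<in> M1"
      then have xc: "x \<in> carrier M13" using M1 by auto
      show "\<pi> z3 \<otimes>\<^bsub>H\<^esub> \<pi> x = \<pi> x \<otimes>\<^bsub>H\<^esub> \<pi> z3"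
        using c13 x z3 group_hom.hom_mult[OF gh13 z3c13 xc] group_hom.hom_mult[OF gh13 xc z3c13] by metis
    qed
    have b: "\<forall>y\<in>M2. \<pi> z3 \<otimes>\<^bsub>H\<^esub> \<pi> y \<otimes>\<^bsub>H\<^esub> inv\<^bsub>H\<^esub> \<pi> z3 = \<pi> (t3 \<otimes>\<^bsub>M12\<^esub> y \<otimes>\<^bsub>M12\<^esub> inv\<^bsub>M12\<^esub> t3)"
    proof
      fix y assume y: "y \<in> M2"
      have "\<pi> z3 \<otimes>\<^bsub>H\<^esub> \<pi> y \<otimes>\<^bsub>H\<^esub> inv\<^bsub>H\<^esub> \<pi> z3 = \<pi> (z3 \<otimes>\<^bsub>M23\<^esub> y \<otimes>\<^bsub>M23\<^esub> inv\<^bsub>M23\<^esub> z3)"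
        using y c23 z3c23 grp(3) by (simp add: group_hom.hom_mult[OF gh23] group_hom.hom_inv[OF gh23] group.inv_closed group.is_monoid monoid.m_closed)
      also have "\<dots> = \<pi> (t3 \<otimes>\<^bsub>M12\<^esub> y \<otimes>\<^bsub>M12\<^esub> inv\<^bsub>M12\<^esub> t3)" using A3 y conjeq[OF t3 y] by simp
      finally show "\<pi> z3 \<otimes>\<^bsub>H\<^esub> \<pi> y \<otimes>\<^bsub>H\<^esub> inv\<^bsub>H\<^esub> \<pi> z3 = \<pi> (t3 \<otimes>\<^bsub>M12\<^esub> y \<otimes>\<^bsub>M12\<^esub> inv\<^bsub>M12\<^esub> t3)" .
    qed
    note RR = R1[unfolded rigid_def, THEN spec[of _ H], THEN spec[of _ \<pi>], THEN spec[of _ "\<pi> z3"], THEN spec[of _ t3]]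
    show ?thesis using RR H hom(1) ker1 ker2 h3 t3 a b by blast
  qed
  have t1D3: "t1 \<otimes>\<^bsub>M23\<^esub> t3 = t3 \<otimes>\<^bsub>M23\<^esub> t1"
  proof -
    have a: "\<forall>x\<in>M3. \<pi> z1 \<otimes>\<^bsub>H\<^esub> \<pi> x = \<pi> x \<otimes>\<^bsub>H\<^esub> \<pi> z1"
    proof
      fix x assume x: "x \<in> M3"
      then have xc: "x \<in> carrier M13" using M3 by auto
      show "\<pi> z1 \<otimes>\<^bsub>H\<^esub> \<pi> x = \<pi> x \<otimes>\<^bsub>H\<^esub> \<pi> z1"
        using c13 x z1 group_hom.hom_mult[OF gh13 z1c13 xc] group_hom.hom_mult[OF gh13 xc z1c13] by metis
    qed
    have b: "\<forall>y\<in>M2. \<pi> z1 \<otimes>\<^bsub>H\<^esub> \<pi> y \<otimes>\<^bsub>H\<^esub> inv\<^bsub>H\<^esub> \<pi> z1 = \<pi> (t1 \<otimes>\<^bsub>M23\<^esub> y \<otimes>\<^bsub>M23\<^esub> inv\<^bsub>M23\<^esub> t1)"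
    proof
      fix y assume y: "y \<in> M2"
      have "\<pi> z1 \<otimes>\<^bsub>H\<^esub> \<pi> y \<otimes>\<^bsub>H\<^esub> inv\<^bsub>H\<^esub> \<pi> z1 = \<pi> (z1 \<otimes>\<^bsub>M12\<^esub> y \<otimes>\<^bsub>M12\<^esub> inv\<^bsub>M12\<^esub> z1)"
        using y c12 z1c12 grp(1) by (simp add: group_hom.hom_mult[OF gh12] group_hom.hom_inv[OF gh12] group.inv_closed group.is_monoid monoid.m_closed)
      also have "\<dots> = \<pi> (t1 \<otimes>\<^bsub>M23\<^esub> y \<otimes>\<^bsub>M23\<^esub> inv\<^bsub>M23\<^esub> t1)" using A1 y conjeq[OF t1 y] by simp
      finally show "\<pi> z1 \<otimes>\<^bsub>H\<^esub> \<pi> y \<otimes>\<^bsub>H\<^esub> inv\<^bsub>H\<^esub> \<pi> z1 = \<pi> (t1 \<otimes>\<^bsub>M23\<^esub> y \<otimes>\<^bsub>M23\<^esub> inv\<^bsub>M23\<^esub> t1)" .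
    qed
    have k3: "\<forall>x\<in>M3. \<pi> x = \<one>\<^bsub>H\<^esub> \<longrightarrow> (\<forall>y\<in>M3. x \<otimes>\<^bsub>M23\<^esub> y = y \<otimes>\<^bsub>M23\<^esub> x)"
      using ker3 comp3 by metis
    have k2: "\<forall>x\<in>M2. \<pi> x = \<one>\<^bsub>H\<^esub> \<longrightarrow> (\<forall>y\<in>M2. x \<otimes>\<^bsub>M23\<^esub> y = y \<otimes>\<^bsub>M23\<^esub> x)"
      using ker2 comp2 by metis
    note RR = R3[unfolded rigid_def, THEN spec[of _ H], THEN spec[of _ \<pi>], THEN spec[of _ "\<pi> z1"], THEN spec[of _ t1]]
    show ?thesis using RR H hom(3) k3 k2 h1 t1 a b by blast
  qed
  have t3in: "t3 \<in> M2 \<inter> normalizer M12 M1" using B1 t3 t3D1 by auto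
  have t1in: "t1 \<in> M2 \<inter> normalizer M23 M3" using B3 t1 t1D3 by auto
  show ?thesis
  proof (intro equalityI subsetI)
    fix y assume y: "y \<in> M2 \<inter> normalizer M12 M1"
    then have "y \<otimes>\<^bsub>M12\<^esub> t3 = t3 \<otimes>\<^bsub>M12\<^esub> y" using C1 t3in by blast
    then have "y \<otimes>\<^bsub>M23\<^esub> t3 = t3 \<otimes>\<^bsub>M23\<^esub> y" using comp2 y t3 by auto
    then show "y \<in> M2 \<inter> normalizer M23 M3" using B3 y by auto
  next
    fix y assume y: "y \<in> M2 \<inter> normalizer M23 M3"
    then have "y \<otimes>\<^bsub>M23\<^esub> t1 = t1 \<otimes>\<^bsub>M23\<^esub> y" using C3 t1in by blast
    then have "y \<otimes>\<^bsub>M12\<^esub> t1 = t1 \<otimes>\<^bsub>M12\<^esub> y" using comp2 y t1 by auto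
    then show "y \<in> M2 \<inter> normalizer M12 M1" using B1 y by auto
  qed
qed
lemma comm13:
  assumes iso: "\<phi> \<in> iso SU2xSU2 M13" and i1: "\<phi> ` SU2xSU2_G1 = M1" and i3: "\<phi> ` SU2xSU2_G2 = M3"
  shows "\<forall>x\<in>M1. \<forall>w\<in>M3. x \<otimes>\<^bsub>M13\<^esub> w = w \<otimes>\<^bsub>M13\<^esub> x"
proof (intro ballI)
  fix x w assume x: "x \<in> M1" and w: "w \<in> M3"
  obtain a where a: "a \<in> SU_set" "x = \<phi> (a, mat 1)" using x i1 by (auto simp: SU2xSU2_G1_def)
  obtain b where b: "b \<in> SU_set" "w = \<phi> (mat 1, b)" using w i3 by (auto simp: SU2xSU2_G2_def)
  have hom: "\<phi> \<in> hom SU2xSU2 M13" using iso by (simp add: iso_def)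
  have c1: "(a, mat 1) \<in> carrier SU2xSU2" and c2: "(mat 1, b) \<in> carrier SU2xSU2"
    using a b by (auto simp: DirProd_def SU_one)
  have "x \<otimes>\<^bsub>M13\<^esub> w = \<phi> ((a, mat 1) \<otimes>\<^bsub>SU2xSU2\<^esub> (mat 1, b))"
    using hom_mult[OF hom c1 c2] a b by simp
  also have "(a, mat 1) \<otimes>\<^bsub>SU2xSU2\<^esub> (mat 1, b) = (mat 1, b) \<otimes>\<^bsub>SU2xSU2\<^esub> (a, mat 1)"
    by (simp add: DirProd_def)
  also have "\<phi> \<dots> = w \<otimes>\<^bsub>M13\<^esub> x"
    using hom_mult[OF hom c2 c1] a b by simp
  finally show "x \<otimes>\<^bsub>M13\<^esub> w = w \<otimes>\<^bsub>M13\<^esub> x" .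
qed

theorem lemma5p1:
  fixes M12 M13 M23 :: "'a monoid" and M1 M2 M3 :: "'a set"
    and H :: "'h monoid" and \<pi> :: "'a \<Rightarrow> 'h"
  assumes grp: "group M12" "group M13" "group M23"
    \<comment> \<open>amalgam: rank-one groups are the intersections of the rank-two groups\<close>
    and M1: "M1 = carrier M12 \<inter> carrier M13"
    and M2: "M2 = carrier M12 \<inter> carrier M23"
    and M3: "M3 = carrier M13 \<inter> carrier M23"
    \<comment> \<open>amalgam: intersections of members are subgroups, with compatible products\<close>
    and sub: "subgroup M1 M12" "subgroup M1 M13" "subgroup M2 M12" "subgroup M2 M23"
             "subgroup M3 M13" "subgroup M3 M23"
    and comp1: "\<forall>x\<in>M1. \<forall>y\<in>M1. x \<otimes>\<^bsub>M12\<^esub> y = x \<otimes>\<^bsub>M13\<^esub> y"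
    and comp2: "\<forall>x\<in>M2. \<forall>y\<in>M2. x \<otimes>\<^bsub>M12\<^esub> y = x \<otimes>\<^bsub>M23\<^esub> y"
    and comp3: "\<forall>x\<in>M3. \<forall>y\<in>M3. x \<otimes>\<^bsub>M13\<^esub> y = x \<otimes>\<^bsub>M23\<^esub> y"
    \<comment> \<open>unambiguous, with the prescribed diagram\<close>
    and iso12: "\<exists>\<phi>. \<phi> \<in> iso SU3 M12 \<and> \<phi> ` SU3_G1 = M1 \<and> \<phi> ` SU3_G2 = M2"
    and iso13: "\<exists>\<phi>. \<phi> \<in> iso SU2xSU2 M13 \<and> \<phi> ` SU2xSU2_G1 = M1 \<and> \<phi> ` SU2xSU2_G2 = M3"
    and iso23: "(\<exists>\<phi>. \<phi> \<in> iso SU3 M23 \<and> \<phi> ` SU3_G1 = M2 \<and> \<phi> ` SU3_G2 = M3)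
              \<or> (\<exists>\<phi>. \<phi> \<in> iso Sp2 M23 \<and> \<phi> ` Sp2_long = M2 \<and> \<phi> ` Sp2_short = M3)
              \<or> (\<exists>\<phi>. \<phi> \<in> iso Sp2 M23 \<and> \<phi> ` Sp2_short = M2 \<and> \<phi> ` Sp2_long = M3)"
    \<comment> \<open>strongly noncollapsing, witnessed by H and \<pi>\<close>
    and H: "group H"
    and hom: "\<pi> \<in> hom M12 H" "\<pi> \<in> hom M13 H" "\<pi> \<in> hom M23 H"
    and gen: "generate H (\<pi> ` (carrier M12 \<union> carrier M13 \<union> carrier M23)) = carrier H"
    and ker1: "\<forall>x\<in>M1. \<pi> x = \<one>\<^bsub>H\<^esub> \<longrightarrow> (\<forall>y\<in>M1. x \<otimes>\<^bsub>M12\<^esub> y = y \<otimes>\<^bsub>M12\<^esub> x)"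
    and ker2: "\<forall>x\<in>M2. \<pi> x = \<one>\<^bsub>H\<^esub> \<longrightarrow> (\<forall>y\<in>M2. x \<otimes>\<^bsub>M12\<^esub> y = y \<otimes>\<^bsub>M12\<^esub> x)"
    and ker3: "\<forall>x\<in>M3. \<pi> x = \<one>\<^bsub>H\<^esub> \<longrightarrow> (\<forall>y\<in>M3. x \<otimes>\<^bsub>M13\<^esub> y = y \<otimes>\<^bsub>M13\<^esub> x)"
  shows "M2 \<inter> normalizer M12 M1 = M2 \<inter> normalizer M23 M3"
proof -
  have G1c: "SU3_G1 \<subseteq> carrier SU3" and G2c: "SU3_G2 \<subseteq> carrier SU3" by (auto simp: G1_iff G2_iff)
  have Lc: "Sp2_long \<subseteq> carrier Sp2" and Sc: "Sp2_short \<subseteq> carrier Sp2" by (auto simp: L_iff S_Sp2)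
  obtain \<phi> where \<phi>: "\<phi> \<in> iso SU3 M12" "\<phi> ` SU3_G1 = M1" "\<phi> ` SU3_G2 = M2" using iso12 by blast
  have g12: "good M12 M1 M2 TYPE('h)"
    using good_iso[OF group_SU grp(1) \<phi>(1) G1c G2c good_SU3_12] \<phi> by simp
  have g23: "good M23 M3 M2 TYPE('h)"
    using iso23
  proof (elim disjE exE conjE)
    fix \<psi> assume a: "\<psi> \<in> iso SU3 M23" "\<psi> ` SU3_G1 = M2" "\<psi> ` SU3_G2 = M3"
    show ?thesis using good_iso[OF group_SU grp(3) a(1) G2c G1c good_SU3_21] a by simp
  next
    fix \<psi> assume a: "\<psi> \<in> iso Sp2 M23" "\<psi> ` Sp2_long = M2" "\<psi> ` Sp2_short = M3"
    show ?thesis using good_iso[OF group_Sp2 grp(3) a(1) Sc Lc good_SpA] a by simp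
  next
    fix \<psi> assume a: "\<psi> \<in> iso Sp2 M23" "\<psi> ` Sp2_short = M2" "\<psi> ` Sp2_long = M3"
    show ?thesis using good_iso[OF group_Sp2 grp(3) a(1) Lc Sc good_SpB] a by simp
  qed
  have c13: "\<forall>x\<in>M1. \<forall>w\<in>M3. x \<otimes>\<^bsub>M13\<^esub> w = w \<otimes>\<^bsub>M13\<^esub> x"
    using iso13 comm13 by blast
  show ?thesis
    by (rule main_argument[OF grp M1 M2 M3 sub comp1 comp2 comp3 g12 g23 c13 H hom ker1 ker2 ker3])
qed

end
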